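(* Let $n\in\mathbb{N}$, $x_1,\dots,x_n\in K^\vee\setminus K$, $t_1,\dots,t_n>0$, and put $r_i=d(x_i,K)$. Let $\pi:K^\vee\to K^\vee/K$ be the canonical quotient map. Let $f_1,\dots,f_n$ be the canonical unit vectors of $(K^\vee)^n$ and let $E=[f_1,\dots,f_n,(x_1,\dots,x_n)]$, an $(n+1)$-dimensional subspace of $((K^\vee)^n,|\cdot|_{t_1}\times\cdots\times|\cdot|_{t_n})$. Then: (1) If $E$ is indecomposable, then $r_1t_1=\cdots=r_nt_n$ and $\{\pi(x_1),\dots,\pi(x_n)\}$ is an orthogonal set. (2) Suppose $r_1t_1=\cdots=r_nt_n=:t$ and $\{\pi(x_1),\dots,\pi(x_n)\}$ is an orthogonal set. Let $e_1,\dots,e_{n+1}\in E'$ be the dual basis of $f_1,\dots,f_n,(x_1,\dots,x_n)$. Then the linear map $E'\to([1,x_1,\dots,x_n],|\cdot|_{1/t})$ with $e_i\mapsto -x_i$ ($1\le i\le n$) and $e_{n+1}\mapsto 1$ is an isometry. In particular $E$ is indecomposable and all $n$-dimensional subspaces of $E$ are isometrically isomorphic to $(K^n,|\cdot|_{t_1}\times\cdots\times|\cdot|_{t_n})$.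
   Context: $K$ is a complete non-archimedean non-trivially valued field which is not spherically complete; $K^\vee$ is a fixed spherically complete immediate extension of $K$. $d(x,K)=\inf_{a\in K}|x-a|$; $K^\vee/K$ carries the quotient norm. For $t>0$, $|z|_t=t|z|$; $((K^\vee)^n,|\cdot|_{t_1}\times\cdots\times|\cdot|_{t_n})$ is $(K^\vee)^n$ as a $K$-normed space with norm $\max_it_i|z_i|$, and subspaces get the induced norm; $(K^n,|\cdot|_{t_1}\times\cdots\times|\cdot|_{t_n})$ is the analogous space over $K$. $([1,x_1,\dots,x_n],|\cdot|_s)$ is the $K$-span of $1,x_1,\dots,x_n$ in $K^\vee$ with norm $|\cdot|_s$. $[\cdot]$ denotes $K$-linear span. $E'$ is the dual with operator norm. A normed space is decomposable if it is isometrically isomorphic to a max-norm direct sum of two nonzero normed spaces, indecomposable otherwise. A set $S\not\ni0$ is orthogonal if $\|\sum\lambda_is_i\|=\max\|\lambda_is_i\|$ for finitely many distinct $s_i\in S$. *)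

theory Defs
  imports Complex_Main
begin

text \<open>The big field K^vee is the type 'a; K is a subset of it (a subfield);
  v is the absolute value of K^vee (restricting to that of K).\<close>

definition nonarch_abs :: "('a::field \<Rightarrow> real) \<Rightarrow> bool" where
  "nonarch_abs v \<longleftrightarrow> (\<forall>x. 0 \<le> v x) \<and> (\<forall>x. v x = 0 \<longleftrightarrow> x = 0)
     \<and> (\<forall>x y. v (x * y) = v x * v y) \<and> (\<forall>x y. v (x + y) \<le> max (v x) (v y))"

definition is_subfield :: "'a::field set \<Rightarrow> bool" where
  "is_subfield K \<longleftrightarrow> 0 \<in> K \<and> 1 \<in> K \<and> (\<forall>a\<in>K. \<forall>b\<in>K. a + b \<in> K \<and> a * b \<in> K \<and> a - b \<in> K)
     \<and> (\<forall>a\<in>K. a \<noteq> 0 \<longrightarrow> inverse a \<in> K)"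

definition complete_wrt :: "'a::field set \<Rightarrow> ('a \<Rightarrow> real) \<Rightarrow> bool" where
  "complete_wrt S v \<longleftrightarrow> (\<forall>s::nat\<Rightarrow>'a. (\<forall>k. s k \<in> S) \<longrightarrow>
      (\<forall>e>0. \<exists>N. \<forall>p\<ge>N. \<forall>q\<ge>N. v (s p - s q) < e) \<longrightarrow>
      (\<exists>l\<in>S. \<forall>e>0. \<exists>N. \<forall>p\<ge>N. v (s p - l) < e))"

definition nontrivial_on :: "'a::field set \<Rightarrow> ('a \<Rightarrow> real) \<Rightarrow> bool" where
  "nontrivial_on S v \<longleftrightarrow> (\<exists>a\<in>S. a \<noteq> 0 \<and> v a \<noteq> 1)"

definition cball_in :: "'a::field set \<Rightarrow> ('a \<Rightarrow> real) \<Rightarrow> 'a \<Rightarrow> real \<Rightarrow> 'a set" where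
  "cball_in S v a r = {y\<in>S. v (y - a) \<le> r}"

definition spherically_complete :: "'a::field set \<Rightarrow> ('a \<Rightarrow> real) \<Rightarrow> bool" where
  "spherically_complete S v \<longleftrightarrow>
     (\<forall>C::('a \<times> real) set. C \<noteq> {} \<longrightarrow> (\<forall>(a,r)\<in>C. a \<in> S \<and> 0 < r) \<longrightarrow>
        (\<forall>(a,r)\<in>C. \<forall>(b,s)\<in>C. cball_in S v a r \<subseteq> cball_in S v b s \<or> cball_in S v b s \<subseteq> cball_in S v a r) \<longrightarrow>
        (\<Inter>(a,r)\<in>C. cball_in S v a r) \<noteq> {})"

text \<open>Immediate extension: same value group and same residue field.\<close>
definition immediate_ext :: "'a::field set \<Rightarrow> ('a \<Rightarrow> real) \<Rightarrow> bool" where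
  "immediate_ext K v \<longleftrightarrow> v ` (UNIV - {0}) = v ` (K - {0})
     \<and> (\<forall>y. v y \<le> 1 \<longrightarrow> (\<exists>a\<in>K. v a \<le> 1 \<and> v (y - a) < 1))"

text \<open>Distance to K, d(x,K); this is also the quotient norm of pi(x) in K^vee/K.\<close>
definition distK :: "'a::field set \<Rightarrow> ('a \<Rightarrow> real) \<Rightarrow> 'a \<Rightarrow> real" where
  "distK K v x = (INF a\<in>K. v (x - a))"

text \<open>The family pi(x_0),...,pi(x_{n-1}) in K^vee/K (quotient norm) is orthogonal:
  no pi(x_i) is 0, and norm of sum lambda_i pi(x_i) = max of norms of lambda_i pi(x_i).\<close>
definition orth_mod :: "'a::field set \<Rightarrow> ('a \<Rightarrow> real) \<Rightarrow> nat \<Rightarrow> (nat \<Rightarrow> 'a) \<Rightarrow> bool" where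
  "orth_mod K v n x \<longleftrightarrow> (\<forall>i<n. x i \<notin> K) \<and>
     (\<forall>lam. (\<forall>i<n. lam i \<in> K) \<longrightarrow>
        distK K v (\<Sum>i<n. lam i * x i) = Max ((\<lambda>i. v (lam i) * distK K v (x i)) ` {..<n}))"

section \<open>Vectors in (K^vee)^n, represented as nat => 'a (coordinates 0..n-1)\<close>

definition vadd :: "(nat \<Rightarrow> 'a::field) \<Rightarrow> (nat \<Rightarrow> 'a) \<Rightarrow> nat \<Rightarrow> 'a" where
  "vadd y z = (\<lambda>i. y i + z i)"

definition vsmul :: "'a::field \<Rightarrow> (nat \<Rightarrow> 'a) \<Rightarrow> nat \<Rightarrow> 'a" where
  "vsmul c y = (\<lambda>i. c * y i)"

definition vzero :: "nat \<Rightarrow> 'a::field" where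
  "vzero = (\<lambda>i. 0)"

definition kspan :: "'a::field set \<Rightarrow> (nat \<Rightarrow> 'a) list \<Rightarrow> (nat \<Rightarrow> 'a) set" where
  "kspan K bs = {(\<lambda>i. \<Sum>j<length bs. c j * (bs ! j) i) | c. \<forall>j<length bs. c j \<in> K}"

definition kspan1 :: "'a::field set \<Rightarrow> 'a list \<Rightarrow> 'a set" where
  "kspan1 K ys = {(\<Sum>j<length ys. c j * ys ! j) | c. \<forall>j<length ys. c j \<in> K}"

definition klin_indep :: "'a::field set \<Rightarrow> (nat \<Rightarrow> 'a) list \<Rightarrow> bool" where
  "klin_indep K bs \<longleftrightarrow> (\<forall>c. (\<forall>j<length bs. c j \<in> K) \<longrightarrow>
      (\<lambda>i. \<Sum>j<length bs. c j * (bs ! j) i) = vzero \<longrightarrow> (\<forall>j<length bs. c j = 0))"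

definition ksubspace :: "'a::field set \<Rightarrow> (nat \<Rightarrow> 'a) set \<Rightarrow> bool" where
  "ksubspace K D \<longleftrightarrow> vzero \<in> D \<and> (\<forall>y\<in>D. \<forall>z\<in>D. vadd y z \<in> D) \<and> (\<forall>c\<in>K. \<forall>y\<in>D. vsmul c y \<in> D)"

definition kdim_is :: "'a::field set \<Rightarrow> (nat \<Rightarrow> 'a) set \<Rightarrow> nat \<Rightarrow> bool" where
  "kdim_is K D m \<longleftrightarrow> (\<exists>bs. length bs = m \<and> klin_indep K bs \<and> kspan K bs = D)"

definition unitv :: "nat \<Rightarrow> nat \<Rightarrow> 'a::field" where
  "unitv i = (\<lambda>k. if k = i then 1 else 0)"

definition xvec :: "nat \<Rightarrow> (nat \<Rightarrow> 'a::field) \<Rightarrow> nat \<Rightarrow> 'a" where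
  "xvec n x = (\<lambda>k. if k < n then x k else 0)"

definition Espace :: "'a::field set \<Rightarrow> nat \<Rightarrow> (nat \<Rightarrow> 'a) \<Rightarrow> (nat \<Rightarrow> 'a) set" where
  "Espace K n x = kspan K (map unitv [0..<n] @ [xvec n x])"

definition pnorm :: "nat \<Rightarrow> (nat \<Rightarrow> real) \<Rightarrow> ('a::field \<Rightarrow> real) \<Rightarrow> (nat \<Rightarrow> 'a) \<Rightarrow> real" where
  "pnorm n t v z = Max ((\<lambda>i. t i * v (z i)) ` {..<n})"

text \<open>This is equivalent to being
  isometrically isomorphic to a max-norm direct sum of two nonzero normed spaces.\<close>
definition decomposable :: "'a::field set \<Rightarrow> ((nat \<Rightarrow> 'a) \<Rightarrow> real) \<Rightarrow> (nat \<Rightarrow> 'a) set \<Rightarrow> bool" where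
  "decomposable K N E \<longleftrightarrow> (\<exists>D1 D2. ksubspace K D1 \<and> ksubspace K D2 \<and> D1 \<subseteq> E \<and> D2 \<subseteq> E
      \<and> D1 \<noteq> {vzero} \<and> D2 \<noteq> {vzero}
      \<and> (\<forall>y\<in>E. \<exists>!p. fst p \<in> D1 \<and> snd p \<in> D2 \<and> y = vadd (fst p) (snd p))
      \<and> (\<forall>d1\<in>D1. \<forall>d2\<in>D2. N (vadd d1 d2) = max (N d1) (N d2)))"

definition indecomposable :: "'a::field set \<Rightarrow> ((nat \<Rightarrow> 'a) \<Rightarrow> real) \<Rightarrow> (nat \<Rightarrow> 'a) set \<Rightarrow> bool" where
  "indecomposable K N E \<longleftrightarrow> \<not> decomposable K N E"

definition klin_functional :: "'a::field set \<Rightarrow> (nat \<Rightarrow> 'a) set \<Rightarrow> ((nat \<Rightarrow> 'a) \<Rightarrow> 'a) \<Rightarrow> bool" where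
  "klin_functional K E phi \<longleftrightarrow> (\<forall>y\<in>E. phi y \<in> K) \<and> (\<forall>y\<in>E. \<forall>z\<in>E. phi (vadd y z) = phi y + phi z)
     \<and> (\<forall>c\<in>K. \<forall>y\<in>E. phi (vsmul c y) = c * phi y)"

definition opnorm :: "('a::field \<Rightarrow> real) \<Rightarrow> ((nat \<Rightarrow> 'a) \<Rightarrow> real) \<Rightarrow> (nat \<Rightarrow> 'a) set \<Rightarrow> ((nat \<Rightarrow> 'a) \<Rightarrow> 'a) \<Rightarrow> real" where
  "opnorm v N E phi = Sup ((\<lambda>y. v (phi y) / N y) ` (E - {vzero}))"

definition Kn :: "'a::field set \<Rightarrow> nat \<Rightarrow> (nat \<Rightarrow> 'a) set" where
  "Kn K n = {a. (\<forall>i<n. a i \<in> K) \<and> (\<forall>i\<ge>n. a i = 0)}"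

definition iso_to_Kn :: "'a::field set \<Rightarrow> ('a \<Rightarrow> real) \<Rightarrow> nat \<Rightarrow> (nat \<Rightarrow> real)
    \<Rightarrow> ((nat \<Rightarrow> 'a) \<Rightarrow> real) \<Rightarrow> (nat \<Rightarrow> 'a) set \<Rightarrow> bool" where
  "iso_to_Kn K v n t N D \<longleftrightarrow> (\<exists>T. bij_betw T (Kn K n) D
      \<and> (\<forall>a\<in>Kn K n. \<forall>b\<in>Kn K n. T (vadd a b) = vadd (T a) (T b))
      \<and> (\<forall>c\<in>K. \<forall>a\<in>Kn K n. T (vsmul c a) = vsmul c (T a))
      \<and> (\<forall>a\<in>Kn K n. N (T a) = pnorm n t v a))"

end

theory Submission
  imports Defs
begin

locale vf =
  fixes K :: "'a::field set" and v :: "'a \<Rightarrow> real"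
  assumes abs_v: "nonarch_abs v" and subK: "is_subfield K"
    and complK: "complete_wrt K v" and immed: "immediate_ext K v"
begin

lemma v_nonneg[simp]: "0 \<le> v a" using abs_v unfolding nonarch_abs_def by blast
lemma v_zero_iff[simp]: "v a = 0 \<longleftrightarrow> a = 0" using abs_v unfolding nonarch_abs_def by blast
lemma v_mult[simp]: "v (a * b) = v a * v b" using abs_v unfolding nonarch_abs_def by blast
lemma v_ultra: "v (a + b) \<le> max (v a) (v b)" using abs_v unfolding nonarch_abs_def by blast
lemma v_pos_iff: "0 < v a \<longleftrightarrow> a \<noteq> 0" using v_nonneg[of a] v_zero_iff[of a] by linarith
lemma v_zero[simp]: "v 0 = 0" by simp
lemma v_one[simp]: "v 1 = 1"
proof -
  have "v 1 = v 1 * v 1" using v_mult[of 1 1] by simp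
  moreover have "v 1 \<noteq> 0" by simp
  ultimately show ?thesis by (metis mult_cancel_left1)
qed
lemma v_minus[simp]: "v (- a) = v a"
proof -
  have "v (-1) * v (-1) = 1" using v_mult[of "-1" "-1"] by simp
  then have "v (-1) = 1 \<or> v (-1) = -1" using square_eq_1_iff by blast
  then have "v (-1) = 1" using v_nonneg[of "-1"] by linarith
  then show ?thesis using v_mult[of "-1" a] by simp
qed
lemma v_commute_diff: "v (a - b) = v (b - a)" by (metis minus_diff_eq v_minus)
lemma v_inverse[simp]: "v (inverse a) = inverse (v a)"
proof (cases "a = 0")
  case False
  then have "v a * v (inverse a) = 1" using v_mult[of a "inverse a"] by simp
  moreover have "v a \<noteq> 0" using False by simp
  ultimately show ?thesis by (metis inverse_unique)
qed simp
lemma v_divide[simp]: "v (a / b) = v a / v b"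
  by (simp add: divide_inverse)
lemma v_diff: "v (a - b) \<le> max (v a) (v b)" using v_ultra[of a "-b"] by simp
lemma v_strict: "v b < v a \<Longrightarrow> v (a + b) = v a"
proof -
  assume h: "v b < v a"
  have 1: "v (a + b) \<le> v a" using v_ultra[of a b] h by simp
  have "v a \<le> max (v (a + b)) (v b)" using v_diff[of "a+b" b] by simp
  then show ?thesis using 1 h by linarith
qed
lemma v_sum_le:
  assumes "finite S" "\<forall>i\<in>S. v (f i) \<le> M" "0 \<le> M"
  shows "v (\<Sum>i\<in>S. f i) \<le> M"
  using assms
proof (induction S rule: finite_induct)
  case (insert a F)
  then show ?case using v_ultra[of "f a" "sum f F"] by (simp add: max_def split: if_splits)
qed simp
lemma v_sum_lt:
  assumes "finite S" "\<forall>i\<in>S. v (f i) < M" "0 < M"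
  shows "v (\<Sum>i\<in>S. f i) < M"
  using assms
proof (induction S rule: finite_induct)
  case (insert a F)
  then show ?case using v_ultra[of "f a" "sum f F"] by (simp add: max_def split: if_splits)
qed simp

lemma K0[simp]: "0 \<in> K" and K1[simp]: "1 \<in> K"
  using subK unfolding is_subfield_def by auto
lemma Kadd[intro]: "a \<in> K \<Longrightarrow> b \<in> K \<Longrightarrow> a + b \<in> K"
  and Kmult[intro]: "a \<in> K \<Longrightarrow> b \<in> K \<Longrightarrow> a * b \<in> K"
  and Kdiff[intro]: "a \<in> K \<Longrightarrow> b \<in> K \<Longrightarrow> a - b \<in> K"
  using subK unfolding is_subfield_def by auto
lemma Kuminus[intro]: "a \<in> K \<Longrightarrow> - a \<in> K" using Kdiff[of 0 a] by simp
lemma Kinverse[intro]: "a \<in> K \<Longrightarrow> inverse a \<in> K"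
  using subK unfolding is_subfield_def by (cases "a = 0") auto
lemma Kdivide[intro]: "a \<in> K \<Longrightarrow> b \<in> K \<Longrightarrow> a / b \<in> K"
  by (simp add: divide_inverse Kmult Kinverse)
lemma Ksum[intro]: "(\<And>i. i \<in> S \<Longrightarrow> f i \<in> K) \<Longrightarrow> sum f S \<in> K"
proof (induction S rule: infinite_finite_induct)
  case (insert x F) then show ?case by (simp add: Kadd)
qed auto

lemma immed_approx: assumes "u \<noteq> 0" shows "\<exists>b\<in>K. v (u - b) < v u"
proof -
  have "v u \<in> v ` (UNIV - {0})" using assms by auto
  then have "v u \<in> v ` (K - {0})" using immed unfolding immediate_ext_def by blast
  then obtain a where a: "a \<in> K" "a \<noteq> 0" "v a = v u" by (metis DiffE image_iff singletonI)
  have "v (u / a) \<le> 1" using a assms by simp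
  then obtain c where c: "c \<in> K" "v (u / a - c) < 1"
    using immed unfolding immediate_ext_def by blast
  have "u - a * c = a * (u / a - c)" using a by (simp add: field_simps)
  then have "v (u - a * c) = v a * v (u / a - c)" by simp
  also have "\<dots> < v u" using a c assms by (simp add: v_pos_iff)
  finally show ?thesis using a c by blast
qed

lemma immed_value: assumes "u \<noteq> 0" shows "\<exists>a\<in>K. a \<noteq> 0 \<and> v a = v u"
proof -
  have "v u \<in> v ` (UNIV - {0})" using assms by auto
  then have "v u \<in> v ` (K - {0})" using immed unfolding immediate_ext_def by blast
  then show ?thesis by (metis DiffE image_iff singletonI)
qed

abbreviation "dK \<equiv> distK K v"

lemma bdd_dK: "bdd_below ((\<lambda>a. v (y - a)) ` K)"
  by (rule bdd_belowI[of _ 0]) auto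
lemma dK_le: "a \<in> K \<Longrightarrow> dK y \<le> v (y - a)"
  unfolding distK_def by (rule cINF_lower[OF bdd_dK])
lemma dK_ge: "(\<And>a. a \<in> K \<Longrightarrow> m \<le> v (y - a)) \<Longrightarrow> m \<le> dK y"
  unfolding distK_def by (rule cINF_greatest) auto
lemma dK_nonneg: "0 \<le> dK y" by (rule dK_ge) simp
lemma dK_approx: "dK y < e \<Longrightarrow> \<exists>a\<in>K. v (y - a) < e"
  unfolding distK_def using cINF_less_iff[of K, OF _ bdd_dK] by (metis K0 empty_iff)
lemma dK_K: "y \<in> K \<Longrightarrow> dK y = 0"
  using dK_le[of y y] dK_nonneg[of y] by simp
lemma dK_translate: "b \<in> K \<Longrightarrow> dK (b + y) = dK y"
proof (rule antisym)
  assume b: "b \<in> K"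
  show "dK (b + y) \<le> dK y"
  proof (rule dK_ge)
    fix a assume "a \<in> K"
    then have "dK (b + y) \<le> v (b + y - (a + b))" using dK_le b by blast
    then show "dK (b + y) \<le> v (y - a)" by (simp add: algebra_simps)
  qed
  show "dK y \<le> dK (b + y)"
  proof (rule dK_ge)
    fix a assume "a \<in> K"
    then have "dK y \<le> v (y - (a - b))" using dK_le b by blast
    then show "dK y \<le> v (b + y - a)" by (simp add: algebra_simps)
  qed
qed

lemma dK_strict: assumes "y \<notin> K" "a \<in> K" shows "dK y < v (y - a)"
proof (rule ccontr)
  assume "\<not> ?thesis"
  then have eq: "v (y - a) \<le> dK y" by simp
  have "y - a \<noteq> 0" using assms by auto
  then obtain b where b: "b \<in> K" "v (y - a - b) < v (y - a)" using immed_approx by blast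
  have "dK y \<le> v (y - (a + b))" using dK_le b assms by blast
  then show False using b eq by (simp add: algebra_simps)
qed

lemma dK_pos: assumes "y \<notin> K" shows "0 < dK y"
proof (rule ccontr)
  assume "\<not> ?thesis"
  then have z: "dK y = 0" using dK_nonneg[of y] by simp
  have "\<forall>k::nat. \<exists>a\<in>K. v (y - a) < 1 / (Suc k)"
    using dK_approx z by simp
  then obtain s where s: "\<And>k. s k \<in> K" "\<And>k. v (y - s k) < 1 / Suc k" by metis
  have cauchy: "\<forall>e>0. \<exists>N. \<forall>p\<ge>N. \<forall>q\<ge>N. v (s p - s q) < e"
  proof (intro allI impI)
    fix e :: real assume e: "e > 0"
    obtain N :: nat where N: "1 / Suc N < e"
      using e by (metis nat_approx_posE)
    show "\<exists>N. \<forall>p\<ge>N. \<forall>q\<ge>N. v (s p - s q) < e"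
    proof (intro exI allI impI)
      fix p q assume pq: "N \<le> p" "N \<le> q"
      have a: "1 / real (Suc p) \<le> 1 / Suc N" using pq by (simp add: frac_le)
      have b: "1 / real (Suc q) \<le> 1 / Suc N" using pq by (simp add: frac_le)
      have "v (s p - s q) \<le> max (v (y - s q)) (v (y - s p))" using v_diff[of "y - s q" "y - s p"] by simp
      moreover have "max (v (y - s q)) (v (y - s p)) < e" using s(2)[of p] s(2)[of q] a b N by simp
      ultimately show "v (s p - s q) < e" by linarith
    qed
  qed
  have sK: "\<forall>k. s k \<in> K" using s(1) by simp
  have CW: "(\<forall>k. s k \<in> K) \<longrightarrow> (\<forall>e>0. \<exists>N. \<forall>p\<ge>N. \<forall>q\<ge>N. v (s p - s q) < e) \<longrightarrow>
      (\<exists>l\<in>K. \<forall>e>0. \<exists>N. \<forall>p\<ge>N. v (s p - l) < e)"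
    using complK[unfolded complete_wrt_def] by (rule spec)
  obtain l where l: "l \<in> K" "\<forall>e>0. \<exists>N. \<forall>p\<ge>N. v (s p - l) < e"
    using CW sK cauchy by blast
  have lt: "v (y - l) < e" if e: "e > 0" for e
  proof -
    obtain N where N: "\<forall>p\<ge>N. v (s p - l) < e" using l e by blast
    obtain M :: nat where M: "1 / Suc M < e" using e by (metis nat_approx_posE)
    let ?p = "max N M"
    have "1 / real (Suc ?p) \<le> 1 / Suc M" by (simp add: frac_le)
    then have 1: "v (y - s ?p) < e" using s(2)[of ?p] M by linarith
    have 2: "v (s ?p - l) < e" using N by simp
    have "v (y - l) \<le> max (v (y - s ?p)) (v (s ?p - l))" using v_ultra[of "y - s ?p" "s ?p - l"] by simp
    moreover have "max (v (y - s ?p)) (v (s ?p - l)) < e" using 1 2 by simp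
    ultimately show ?thesis by linarith
  qed
  have "\<not> 0 < v (y - l)"
  proof
    assume h: "0 < v (y - l)"
    show False using lt[OF h] by simp
  qed
  then have "y = l" using v_pos_iff[of "y - l"] by simp
  then show False using l assms by simp
qed

end

context vf begin

lemma dK_add: "dK (y + z) \<le> max (dK y) (dK z)"
proof (rule field_le_epsilon)
  fix e :: real assume e: "0 < e"
  obtain a where a: "a \<in> K" "v (y - a) < dK y + e" using dK_approx[of y "dK y + e"] e by auto
  obtain b where b: "b \<in> K" "v (z - b) < dK z + e" using dK_approx[of z "dK z + e"] e by auto
  have "dK (y + z) \<le> v (y + z - (a + b))" using dK_le a b by blast
  also have "\<dots> \<le> max (v (y - a)) (v (z - b))" using v_ultra[of "y - a" "z - b"] by (simp add: algebra_simps)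
  also have "\<dots> \<le> max (dK y) (dK z) + e" using a b by (auto simp: max_def)
  finally show "dK (y + z) \<le> max (dK y) (dK z) + e" .
qed

lemma dK_sum_le:
  assumes "finite S" "\<forall>i\<in>S. dK (f i) \<le> B" "0 \<le> B"
  shows "dK (\<Sum>i\<in>S. f i) \<le> B"
  using assms
proof (induction S rule: finite_induct)
  case empty then show ?case using dK_K[of 0] by simp
next
  case (insert a F)
  then have "dK (f a + sum f F) \<le> max (dK (f a)) (dK (sum f F))" using dK_add by blast
  then show ?case using insert by (simp add: max_def split: if_splits)
qed

lemma dK_smul: assumes c: "c \<in> K" shows "dK (c * y) = v c * dK y"
proof (cases "c = 0")
  case True then show ?thesis using dK_K[of 0] by simp
next
  case False
  then have vc: "v c > 0" by (simp add: v_pos_iff)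
  show ?thesis
  proof (rule antisym)
    have "dK (c * y) / v c \<le> dK y"
    proof (rule dK_ge)
      fix a assume a: "a \<in> K"
      have "dK (c * y) \<le> v (c * y - c * a)" using dK_le a c by blast
      also have "\<dots> = v c * v (y - a)" by (metis right_diff_distrib v_mult)
      finally show "dK (c * y) / v c \<le> v (y - a)" using vc by (simp add: field_simps)
    qed
    then show "dK (c * y) \<le> v c * dK y" using vc by (simp add: field_simps)
    show "v c * dK y \<le> dK (c * y)"
    proof -
      have "dK y \<le> dK (c * y) / v c"
      proof -
        have "v c * dK y \<le> v (c * y - a)" if a: "a \<in> K" for a
        proof -
          have "dK y \<le> v (y - a / c)" using dK_le a c by blast
          moreover have "c * y - a = c * (y - a / c)" using False by (simp add: field_simps)
          ultimately show ?thesis using vc by simp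
        qed
        then have "v c * dK y \<le> dK (c * y)" by (rule dK_ge)
        then show ?thesis using vc by (simp add: field_simps)
      qed
      then show ?thesis using vc by (simp add: field_simps)
    qed
  qed
qed

lemma v_lin_ge: assumes "c \<in> K" "mu \<in> K" "y \<notin> K" shows "v mu * dK y \<le> v (c + mu * y)"
proof (cases "mu = 0")
  case True then show ?thesis using dK_nonneg[of y] by simp
next
  case False
  have "dK y \<le> v (y - (- c / mu))" using dK_le assms by blast
  moreover have "c + mu * y = mu * (y - (- c / mu))" using False by (simp add: field_simps)
  ultimately show ?thesis by (simp add: mult_left_mono)
qed

end

locale ctx = vf +
  fixes n :: nat and x :: "nat \<Rightarrow> 'a" and t :: "nat \<Rightarrow> real"
  assumes n_pos: "1 \<le> n" and x_notin: "\<forall>i<n. x i \<notin> K" and t_pos: "\<forall>i<n. 0 < t i"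
begin

definition ev :: "(nat \<Rightarrow> 'a) \<Rightarrow> nat \<Rightarrow> 'a" where
  "ev cc = (\<lambda>k. if k < n then cc k + cc n * x k else 0)"
definition cK :: "(nat \<Rightarrow> 'a) \<Rightarrow> bool" where
  "cK cc \<longleftrightarrow> (\<forall>j\<le>n. cc j \<in> K)"
abbreviation "NN \<equiv> pnorm n t v"
abbreviation "EE \<equiv> Espace K n x"
abbreviation "r i \<equiv> dK (x i)"

lemma r_pos: "i < n \<Longrightarrow> 0 < r i" using dK_pos x_notin by blast

lemma sum_delta_nat: "(\<Sum>j<n. c j * (if k = j then 1 else 0)) = (if k < n then c k else (0::'a))"
  by (simp add: if_distrib sum.delta cong: if_cong)

lemma E_char: "EE = {ev cc | cc. cK cc}"
proof -
  have len: "length (map unitv [0..<n] @ [xvec n x]) = Suc n" by simp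
  have nth: "(map unitv [0..<n] @ [xvec n x]) ! j = (if j < n then unitv j else xvec n x)" if "j < Suc n" for j
    using that by (auto simp: nth_append)
  have sm: "(\<lambda>i. \<Sum>j<Suc n. c j * ((map unitv [0..<n] @ [xvec n x]) ! j) i) = ev c" for c
  proof
    fix i
    have "(\<Sum>j<Suc n. c j * ((map unitv [0..<n] @ [xvec n x]) ! j) i)
        = (\<Sum>j<n. c j * unitv j i) + c n * xvec n x i"
      by (simp add: nth_append)
    also have "\<dots> = ev c i"
      unfolding unitv_def xvec_def ev_def using sum_delta_nat[of c i] by simp
    finally show "(\<Sum>j<Suc n. c j * ((map unitv [0..<n] @ [xvec n x]) ! j) i) = ev c i" .
  qed
  show ?thesis unfolding Espace_def kspan_def len sm cK_def
    by (simp add: less_Suc_eq_le)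
qed

lemma ev_in_E: "cK cc \<Longrightarrow> ev cc \<in> EE" using E_char by blast
lemma E_ev: "y \<in> EE \<Longrightarrow> \<exists>cc. cK cc \<and> y = ev cc" using E_char by blast

lemma ev_cong: "(\<And>j. j \<le> n \<Longrightarrow> a j = b j) \<Longrightarrow> ev a = ev b"
  unfolding ev_def by (rule ext) simp
lemma ev_add: "vadd (ev a) (ev b) = ev (\<lambda>j. a j + b j)"
  unfolding ev_def vadd_def by (rule ext) (simp add: algebra_simps)
lemma ev_smul: "vsmul c (ev a) = ev (\<lambda>j. c * a j)"
  unfolding ev_def vsmul_def by (rule ext) (simp add: algebra_simps)
lemma ev_zero: "vzero = ev (\<lambda>j. 0)"
  unfolding ev_def vzero_def by (rule ext) simp
lemma cK_add: "cK a \<Longrightarrow> cK b \<Longrightarrow> cK (\<lambda>j. a j + b j)" unfolding cK_def by auto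
lemma cK_smul: "c \<in> K \<Longrightarrow> cK a \<Longrightarrow> cK (\<lambda>j. c * a j)" unfolding cK_def by auto
lemma cK_zero: "cK (\<lambda>j. 0)" unfolding cK_def by auto

lemma ev_inj: assumes "cK a" "cK b" "ev a = ev b" shows "\<forall>j\<le>n. a j = b j"
proof -
  have e: "a k + a n * x k = b k + b n * x k" if "k < n" for k
    using fun_cong[OF assms(3), of k] that unfolding ev_def by simp
  have an: "a n = b n"
  proof (rule ccontr)
    assume ne: "a n \<noteq> b n"
    have "x 0 = (b 0 - a 0) / (a n - b n)" using e[of 0] n_pos ne
      by (simp add: field_simps)
    moreover have "(b 0 - a 0) / (a n - b n) \<in> K" using assms(1,2) n_pos unfolding cK_def
      by (intro Kdivide Kdiff) auto
    ultimately show False using x_notin n_pos by auto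
  qed
  show ?thesis
  proof (intro allI impI)
    fix j assume "j \<le> n"
    then show "a j = b j" using an e[of j] by (cases "j = n") auto
  qed
qed

lemma ev_zero_iff: "cK a \<Longrightarrow> ev a = vzero \<longleftrightarrow> (\<forall>j\<le>n. a j = 0)"
  using ev_inj[of a "\<lambda>j. 0"] cK_zero ev_zero ev_cong by metis

lemma unitv_ev: "i < n \<Longrightarrow> unitv i = ev (\<lambda>j. if j = i then 1 else 0)"
  unfolding unitv_def ev_def by (rule ext) auto
lemma xvec_ev: "xvec n x = ev (\<lambda>j. if j = n then 1 else 0)"
  unfolding xvec_def ev_def by (rule ext) auto
lemma cK_delta: "c \<in> K \<Longrightarrow> cK (\<lambda>j. if j = i then c else 0)" unfolding cK_def by auto

lemma unitv_E: "i < n \<Longrightarrow> unitv i \<in> EE" using unitv_ev[of i] ev_in_E cK_delta[of 1 i] by simp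
lemma xvec_E: "xvec n x \<in> EE" using xvec_ev ev_in_E cK_delta[of 1 n] by simp

lemma E_vanish: "y \<in> EE \<Longrightarrow> k \<ge> n \<Longrightarrow> y k = 0"
  using E_ev unfolding ev_def by fastforce

lemma NN_def': "NN y = Max ((\<lambda>i. t i * v (y i)) ` {..<n})" unfolding pnorm_def ..
lemma fin_ne: "finite ((\<lambda>i. t i * v (y i)) ` {..<n})" "(\<lambda>i. t i * v (y i)) ` {..<n} \<noteq> {}"
proof -
  have "0 \<in> {..<n}" using n_pos by simp
  then show "(\<lambda>i. t i * v (y i)) ` {..<n} \<noteq> {}" by blast
qed simp
lemma NN_ge: "i < n \<Longrightarrow> t i * v (y i) \<le> NN y"
  unfolding NN_def' by (rule Max_ge[OF fin_ne(1)]) auto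
lemma NN_nonneg: "0 \<le> NN y"
  using NN_ge[of 0 y] n_pos t_pos by (meson dual_order.trans less_le_not_le mult_nonneg_nonneg v_nonneg zero_less_one)
lemma NN_le: "(\<And>i. i < n \<Longrightarrow> t i * v (y i) \<le> M) \<Longrightarrow> NN y \<le> M"
  unfolding NN_def' using fin_ne by (subst Max_le_iff) auto
lemma NN_lt: "(\<And>i. i < n \<Longrightarrow> t i * v (y i) < M) \<Longrightarrow> NN y < M"
  unfolding NN_def' using fin_ne by (subst Max_less_iff) auto
lemma NN_attained: "\<exists>i<n. NN y = t i * v (y i)"
proof -
  have "NN y \<in> (\<lambda>i. t i * v (y i)) ` {..<n}" unfolding NN_def' using fin_ne by (rule Max_in)
  then show ?thesis by auto
qed
lemma NN_pos: assumes "y \<in> EE" "y \<noteq> vzero" shows "0 < NN y"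
proof -
  obtain k where "y k \<noteq> 0" using assms(2) unfolding vzero_def by auto
  then have k: "k < n" using E_vanish[OF assms(1)] by (meson not_le)
  have "0 < t k * v (y k)" using t_pos k \<open>y k \<noteq> 0\<close> by (simp add: v_pos_iff)
  then show ?thesis using NN_ge[OF k, of y] by linarith
qed

lemma NN_split0:
  fixes f :: "nat \<Rightarrow> real"
  assumes "k < n" "\<And>i. i < n \<Longrightarrow> 0 \<le> f i"
  shows "Max (f ` {..<n}) = max (Max (insert 0 (f ` ({..<n} - {k})))) (f k)"
proof -
  have "{..<n} = insert k ({..<n} - {k})" using assms by auto
  then have "f ` {..<n} = insert (f k) (f ` ({..<n} - {k}))" by auto
  then have "Max (f ` {..<n}) = Max (insert (f k) (f ` ({..<n} - {k})))" by simp
  also have "\<dots> = max (f k) (Max (insert 0 (f ` ({..<n} - {k}))))"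
  proof (cases "{..<n} - {k} = {}")
    case True
    then have e: "f ` ({..<n} - {k}) = {}" by simp
    show ?thesis unfolding e using assms(2)[of k] assms(1) by (simp add: max_def)
  next
    case False
    have "Max (insert 0 (f ` ({..<n} - {k}))) = max 0 (Max (f ` ({..<n} - {k})))"
      using False by (simp add: Max_insert)
    also have "\<dots> = Max (f ` ({..<n} - {k}))"
    proof -
      obtain j where j: "j \<in> {..<n} - {k}" using False by auto
      have "f j \<le> Max (f ` ({..<n} - {k}))" by (rule Max_ge) (use j in auto)
      moreover have "0 \<le> f j" using assms(2) j by auto
      ultimately have "0 \<le> Max (f ` ({..<n} - {k}))" by linarith
      then show ?thesis by simp
    qed
    finally show ?thesis using False by (simp add: Max_insert)
  qed
  finally show ?thesis by (simp add: max.commute)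
qed

lemma NN_split: "k < n \<Longrightarrow> NN y = max (Max (insert 0 ((\<lambda>i. t i * v (y i)) ` ({..<n} - {k})))) (t k * v (y k))"
  unfolding NN_def' by (rule NN_split0) (use t_pos in \<open>auto intro: mult_nonneg_nonneg less_imp_le\<close>)

end

lemma max_aux: fixes a b c M :: real
  shows "a \<le> max c b \<Longrightarrow> b \<le> max a c \<Longrightarrow> c \<le> M \<Longrightarrow> max M a = max M b"
  unfolding max_def by (auto split: if_splits)

lemma max_ultra:
  fixes M tk vC vCl vl :: real
  assumes "tk > 0" "tk * vC \<le> M" "vCl \<le> max vC vl" "vl \<le> max vCl vC" "0 \<le> M"
  shows "max M (tk * vCl) = max M (tk * vl)"
proof -
  have a: "tk * vCl \<le> max (tk * vC) (tk * vl)" using assms(1,3)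
    by (metis max.mono max_def mult_left_mono less_imp_le mult_le_cancel_left_pos)
  have b: "tk * vl \<le> max (tk * vCl) (tk * vC)" using assms(1,4)
    by (metis max.mono max_def mult_left_mono less_imp_le mult_le_cancel_left_pos)
  show ?thesis using max_aux[OF a b assms(2)] .
qed

context ctx begin

definition Mk :: "nat \<Rightarrow> (nat \<Rightarrow> 'a) \<Rightarrow> real" where
  "Mk k y = Max (insert 0 ((\<lambda>i. t i * v (y i)) ` ({..<n} - {k})))"

lemma NN_Mk: "k < n \<Longrightarrow> NN y = max (Mk k y) (t k * v (y k))"
  unfolding Mk_def by (rule NN_split)

lemma Mk_nonneg: "0 \<le> Mk k y" unfolding Mk_def by (rule Max_ge) auto

lemma Mk_ge: "i < n \<Longrightarrow> i \<noteq> k \<Longrightarrow> t i * v (y i) \<le> Mk k y" unfolding Mk_def by (rule Max_ge) auto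

lemma Mk_cong: "(\<And>i. i < n \<Longrightarrow> i \<noteq> k \<Longrightarrow> y i = z i) \<Longrightarrow> Mk k y = Mk k z"
  unfolding Mk_def by (intro arg_cong[where f=Max] arg_cong[where f="insert 0"] image_cong) auto

lemma Mk_le: "0 \<le> M \<Longrightarrow> (\<And>i. i < n \<Longrightarrow> i \<noteq> k \<Longrightarrow> t i * v (y i) \<le> M) \<Longrightarrow> Mk k y \<le> M"
  unfolding Mk_def by (subst Max_le_iff) auto

lemma decomp_gen:
  assumes k: "k < n"
    and beta: "\<forall>i<n. beta i \<in> K" and gam: "gam \<in> K"
    and bound: "\<And>cc. cK cc \<Longrightarrow> cc k = (\<Sum>i\<in>{..<n}-{k}. beta i * cc i) + cc n * gam
        \<Longrightarrow> t k * v (ev cc k) \<le> Mk k (ev cc)"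
  shows "decomposable K NN EE"
proof -
  define cond where "cond cc \<longleftrightarrow> cK cc \<and> cc k = (\<Sum>i\<in>{..<n}-{k}. beta i * cc i) + cc n * gam" for cc
  define D1 where "D1 = {ev cc | cc. cond cc}"
  define dl where "dl l = (\<lambda>i::nat. if i = k then l else (0::'a))" for l
  define D2 where "D2 = {dl l | l. l \<in> K}"
  have kn: "k \<noteq> n" using k by simp
  have dl_ev: "dl l = ev (\<lambda>j. if j = k then l else 0)" for l
    unfolding dl_def ev_def using k by (intro ext) auto
  have dlK: "l \<in> K \<Longrightarrow> cK (\<lambda>j. if j = k then l else 0)" for l by (rule cK_delta)
  have sub1: "ksubspace K D1"
    unfolding ksubspace_def
  proof (intro conjI ballI)
    show "vzero \<in> D1" unfolding D1_def cond_def ev_zero using cK_zero by auto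
  next
    fix y z assume "y \<in> D1" "z \<in> D1"
    then obtain a b where a: "cond a" "y = ev a" and b: "cond b" "z = ev b" unfolding D1_def by auto
    have "cond (\<lambda>j. a j + b j)" using a(1) b(1) unfolding cond_def
      by (auto simp: cK_add sum.distrib algebra_simps)
    then show "vadd y z \<in> D1" unfolding D1_def a b ev_add by auto
  next
    fix c y assume c: "c \<in> K" and "y \<in> D1"
    then obtain a where a: "cond a" "y = ev a" unfolding D1_def by auto
    have "cond (\<lambda>j. c * a j)" using a(1) c unfolding cond_def
      by (auto simp: cK_smul sum_distrib_left algebra_simps)
    then show "vsmul c y \<in> D1" unfolding D1_def a ev_smul by auto
  qed
  have sub2: "ksubspace K D2"
    unfolding ksubspace_def
  proof (intro conjI ballI)
    have "vzero = dl 0" unfolding vzero_def dl_def by auto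
    then show "vzero \<in> D2" unfolding D2_def by auto
  next
    fix y z assume "y \<in> D2" "z \<in> D2"
    then obtain a b where "a \<in> K" "y = dl a" "b \<in> K" "z = dl b" unfolding D2_def by auto
    moreover have "vadd (dl a) (dl b) = dl (a + b)" unfolding vadd_def dl_def by auto
    ultimately show "vadd y z \<in> D2" unfolding D2_def by auto
  next
    fix c y assume c: "c \<in> K" and "y \<in> D2"
    then obtain a where "a \<in> K" "y = dl a" unfolding D2_def by auto
    moreover have "vsmul c (dl a) = dl (c * a)" unfolding vsmul_def dl_def by auto
    ultimately show "vsmul c y \<in> D2" unfolding D2_def using c by auto
  qed
  have D1E: "D1 \<subseteq> EE" unfolding D1_def cond_def using ev_in_E by auto
  have D2E: "D2 \<subseteq> EE" unfolding D2_def using ev_in_E dl_ev dlK by auto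
  define c0 where "c0 = (\<lambda>j. if j = k then gam else if j = n then 1 else (0::'a))"
  have c0: "cond c0"
  proof -
    have "cK c0" unfolding cK_def c0_def using gam by auto
    moreover have "(\<Sum>i\<in>{..<n}-{k}. beta i * c0 i) = 0" unfolding c0_def by (intro sum.neutral) auto
    ultimately show ?thesis unfolding cond_def c0_def using kn by auto
  qed
  have "ev c0 k \<noteq> 0"
  proof
    assume "ev c0 k = 0"
    then have "x k = - gam" using k kn unfolding ev_def c0_def by (simp add: add_eq_0_iff)
    then show False using x_notin k Kuminus[OF gam] by auto
  qed
  then have ne1: "D1 \<noteq> {vzero}" unfolding D1_def using c0 unfolding vzero_def by (metis (mono_tags, lifting) mem_Collect_eq singletonD)
  have "dl 1 \<noteq> vzero" unfolding dl_def vzero_def by (metis one_neq_zero)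
  then have ne2: "D2 \<noteq> {vzero}" unfolding D2_def by (metis (mono_tags, lifting) K1 mem_Collect_eq singletonD)
  have uniq: "d1 = d1' \<and> d2 = d2'" if h: "d1 \<in> D1" "d2 \<in> D2" "d1' \<in> D1" "d2' \<in> D2"
      "vadd d1 d2 = vadd d1' d2'" for d1 d2 d1' d2'
  proof -
    obtain a where a: "cond a" "d1 = ev a" using h(1) unfolding D1_def by auto
    obtain a' where a': "cond a'" "d1' = ev a'" using h(3) unfolding D1_def by auto
    obtain l where l: "l \<in> K" "d2 = dl l" using h(2) unfolding D2_def by auto
    obtain l' where l': "l' \<in> K" "d2' = dl l'" using h(4) unfolding D2_def by auto
    have "ev (\<lambda>j. a j + (if j = k then l else 0)) = ev (\<lambda>j. a' j + (if j = k then l' else 0))"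
      using h(5) unfolding a(2) a'(2) l(2) l'(2) dl_ev ev_add .
    moreover have "cK (\<lambda>j. a j + (if j = k then l else 0))" "cK (\<lambda>j. a' j + (if j = k then l' else 0))"
      using a(1) a'(1) l l' unfolding cond_def by (auto intro!: cK_add cK_delta)
    ultimately have eq: "\<forall>j\<le>n. a j + (if j = k then l else 0) = a' j + (if j = k then l' else 0)"
      using ev_inj by blast
    have ne: "j \<le> n \<Longrightarrow> j \<noteq> k \<Longrightarrow> a j = a' j" for j using eq by auto
    have "a k = a' k"
    proof -
      have "(\<Sum>i\<in>{..<n}-{k}. beta i * a i) = (\<Sum>i\<in>{..<n}-{k}. beta i * a' i)"
        using ne by (intro sum.cong) auto
      moreover have "a n = a' n" using ne kn by auto
      ultimately show ?thesis using a(1) a'(1) unfolding cond_def by simp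
    qed
    then have "l = l'" using eq k by (metis add_left_cancel less_imp_le)
    moreover have "ev a = ev a'" using ne \<open>a k = a' k\<close> by (intro ev_cong) (metis)
    ultimately show ?thesis using a a' l l' by simp
  qed
  have ex: "\<exists>d1 d2. d1 \<in> D1 \<and> d2 \<in> D2 \<and> y = vadd d1 d2" if y: "y \<in> EE" for y
  proof -
    obtain cc where cc: "cK cc" "y = ev cc" using E_ev y by blast
    define S where "S = (\<Sum>i\<in>{..<n}-{k}. beta i * cc i) + cc n * gam"
    define cc' where "cc' = cc(k := S)"
    have SK: "S \<in> K" unfolding S_def using cc(1) beta gam unfolding cK_def by (intro Kadd Ksum Kmult) auto
    have "(\<Sum>i\<in>{..<n}-{k}. beta i * cc' i) = (\<Sum>i\<in>{..<n}-{k}. beta i * cc i)"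
      unfolding cc'_def by (intro sum.cong) auto
    then have c1: "cond cc'" unfolding cond_def using cc(1) SK kn unfolding cK_def cc'_def S_def by auto
    have dK': "cc k - S \<in> K" using cc(1) SK k unfolding cK_def by auto
    have "y = vadd (ev cc') (dl (cc k - S))"
      unfolding cc(2) dl_ev ev_add by (rule ev_cong) (auto simp: cc'_def)
    then show ?thesis using c1 dK' unfolding D1_def D2_def by blast
  qed
  have unique: "\<forall>y\<in>EE. \<exists>!p. fst p \<in> D1 \<and> snd p \<in> D2 \<and> y = vadd (fst p) (snd p)"
  proof
    fix y assume y: "y \<in> EE"
    obtain d1 d2 where d: "d1 \<in> D1" "d2 \<in> D2" "y = vadd d1 d2" using ex[OF y] by blast
    show "\<exists>!p. fst p \<in> D1 \<and> snd p \<in> D2 \<and> y = vadd (fst p) (snd p)"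
    proof (rule ex1I[of _ "(d1, d2)"])
      show "fst (d1, d2) \<in> D1 \<and> snd (d1, d2) \<in> D2 \<and> y = vadd (fst (d1, d2)) (snd (d1, d2))"
        unfolding fst_conv snd_conv using d(1) d(2) d(3) by (intro conjI)
    next
      fix p assume p: "fst p \<in> D1 \<and> snd p \<in> D2 \<and> y = vadd (fst p) (snd p)"
      have "vadd (fst p) (snd p) = vadd d1 d2" using p d(3) by simp
      then have "fst p = d1 \<and> snd p = d2" using uniq[of "fst p" "snd p" d1 d2] d(1) d(2) p by blast
      then show "p = (d1, d2)" by (simp add: prod_eq_iff)
    qed
  qed
  have normprop: "NN (vadd d1 d2) = max (NN d1) (NN d2)" if h: "d1 \<in> D1" "d2 \<in> D2" for d1 d2
  proof -
    obtain a where a: "cond a" "d1 = ev a" using h(1) unfolding D1_def by auto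
    obtain l where l: "l \<in> K" "d2 = dl l" using h(2) unfolding D2_def by auto
    have b: "t k * v (d1 k) \<le> Mk k d1" using bound a unfolding cond_def by auto
    have m1: "Mk k (vadd d1 d2) = Mk k d1" by (rule Mk_cong) (simp add: vadd_def l(2) dl_def)
    have m2: "Mk k d2 = 0" using Mk_nonneg[of k d2] Mk_le[of 0 k d2] by (simp add: l(2) dl_def)
    have "NN (vadd d1 d2) = max (Mk k d1) (t k * v (d1 k + l))"
      using NN_Mk[OF k, of "vadd d1 d2"] m1 by (simp add: vadd_def l(2) dl_def)
    also have "\<dots> = max (Mk k d1) (t k * v l)"
      apply (rule max_ultra[of "t k" "v (d1 k)"])
      using t_pos k b Mk_nonneg[of k d1] v_ultra[of "d1 k" l] v_diff[of "d1 k + l" "d1 k"] by auto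
    also have "\<dots> = max (NN d1) (NN d2)"
    proof -
      have tl: "0 \<le> t k * v l" by (intro mult_nonneg_nonneg) (use t_pos k in auto)
      have "NN d1 = Mk k d1" using NN_Mk[OF k, of d1] b by simp
      moreover have "NN d2 = t k * v l" using NN_Mk[OF k, of d2] m2 tl by (simp add: l(2) dl_def)
      ultimately show ?thesis by simp
    qed
    finally show ?thesis .
  qed
  show ?thesis unfolding decomposable_def
    using sub1 sub2 D1E D2E ne1 ne2 unique normprop by blast
qed

end

lemma iden_aux:
  fixes lk ck Sc cn e xk Sx :: "'a::field"
  assumes "lk * ck = - Sc - cn * e"
  shows "lk * (ck + cn * xk) = - (Sc + cn * Sx) + cn * (lk * xk + Sx - e)"
proof -
  have "lk * (ck + cn * xk) = lk * ck + lk * cn * xk" by (simp add: algebra_simps)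
  also have "\<dots> = (- Sc - cn * e) + lk * cn * xk" using assms by simp
  also have "\<dots> = - (Sc + cn * Sx) + cn * (lk * xk + Sx - e)" by (simp add: algebra_simps)
  finally show ?thesis .
qed

context ctx begin

lemma part1_eq:
  assumes ij: "i < n" "j < n" and lt: "r i * t i < r j * t j"
  shows "decomposable K NN EE"
proof -
  have ti: "0 < t i" using t_pos ij by auto
  have tj: "0 < t j" using t_pos ij by auto
  have "dK (x i) < r j * t j / t i" using lt ti by (simp add: field_simps)
  then obtain e where e: "e \<in> K" "v (x i - e) < r j * t j / t i" using dK_approx by blast
  have te: "t i * v (x i - e) \<le> r j * t j" using e(2) ti by (simp add: field_simps)
  have jne: "j \<noteq> i" using lt by auto
  show ?thesis
  proof (rule decomp_gen[of i "\<lambda>_. 0" "- e"])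
    show "i < n" by fact
    show "\<forall>i<n. (0::'a) \<in> K" by simp
    show "- e \<in> K" using e by auto
  next
    fix cc assume cc: "cK cc" and cond: "cc i = (\<Sum>l\<in>{..<n} - {i}. 0 * cc l) + cc n * - e"
    have ci: "cc i = - (cc n * e)" using cond by simp
    have "ev cc i = cc n * (x i - e)" using ij ci unfolding ev_def by (simp add: algebra_simps)
    then have "t i * v (ev cc i) = v (cc n) * (t i * v (x i - e))" by simp
    also have "\<dots> \<le> v (cc n) * (r j * t j)" using te by (simp add: mult_left_mono)
    also have "\<dots> = t j * (v (cc n) * r j)" by simp
    also have "\<dots> \<le> t j * v (cc j + cc n * x j)"
      using v_lin_ge[of "cc j" "cc n" "x j"] cc ij x_notin tj unfolding cK_def by (simp add: mult_left_mono)
    also have "\<dots> = t j * v (ev cc j)" using ij unfolding ev_def by simp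
    also have "\<dots> \<le> Mk i (ev cc)" using Mk_ge[of j i] ij jne by simp
    finally show "t i * v (ev cc i) \<le> Mk i (ev cc)" .
  qed
qed

lemma orth_n1: assumes "n = 1" shows "orth_mod K v n x"
  unfolding orth_mod_def
proof (intro conjI)
  show "\<forall>i<n. x i \<notin> K" using x_notin .
  show "\<forall>lam. (\<forall>i<n. lam i \<in> K) \<longrightarrow> dK (\<Sum>i<n. lam i * x i) = Max ((\<lambda>i. v (lam i) * dK (x i)) ` {..<n})"
  proof (intro allI impI)
  fix lam :: "nat \<Rightarrow> 'a" assume "\<forall>i<n. lam i \<in> K"
  then have "lam 0 \<in> K" using assms by simp
  then show "dK (\<Sum>i<n. lam i * x i) = Max ((\<lambda>i. v (lam i) * dK (x i)) ` {..<n})"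
    using assms dK_smul by (simp add: lessThan_Suc)
  qed
qed

lemma part1_orth:
  assumes T: "\<forall>i<n. r i * t i = T" and no: "\<not> orth_mod K v n x"
  shows "decomposable K NN EE"
proof -
  obtain lam where lam: "\<forall>i<n. lam i \<in> K"
    and ne: "dK (\<Sum>i<n. lam i * x i) \<noteq> Max ((\<lambda>i. v (lam i) * r i) ` {..<n})"
    using no x_notin unfolding orth_mod_def by blast
  define w where "w = (\<Sum>i<n. lam i * x i)"
  define R where "R = Max ((\<lambda>i. v (lam i) * r i) ` {..<n})"
  have finR: "finite ((\<lambda>i. v (lam i) * r i) ` {..<n})" "(\<lambda>i. v (lam i) * r i) ` {..<n} \<noteq> {}"
  proof -
    have "0 \<in> {..<n}" using n_pos by simp
    then show "(\<lambda>i. v (lam i) * r i) ` {..<n} \<noteq> {}" by blast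
  qed simp
  have Rge: "i < n \<Longrightarrow> v (lam i) * r i \<le> R" for i unfolding R_def by (rule Max_ge[OF finR(1)]) auto
  have "0 \<le> v (lam 0) * r 0" by (intro mult_nonneg_nonneg v_nonneg dK_nonneg)
  then have R0: "0 \<le> R" using Rge[of 0] n_pos by simp
  have "dK w \<le> R" unfolding w_def
    by (rule dK_sum_le) (use lam dK_smul Rge R0 in auto)
  then have wR: "dK w < R" using ne unfolding w_def R_def by simp
  then have Rpos: "0 < R" using dK_nonneg[of w] by linarith
  obtain k where k: "k < n" "R = v (lam k) * r k"
  proof -
    have "R \<in> (\<lambda>i. v (lam i) * r i) ` {..<n}" unfolding R_def using finR by (rule Max_in)
    then show ?thesis using that by auto
  qed
  have lk: "lam k \<noteq> 0" using k Rpos by auto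
  have vlk: "0 < v (lam k)" using lk by (simp add: v_pos_iff)
  obtain e where e: "e \<in> K" "v (w - e) < R" using dK_approx wR by blast
  have "n \<noteq> 1"
  proof
    assume "n = 1"
    then have "orth_mod K v n x" by (rule orth_n1)
    then show False using no by simp
  qed
  then have n2: "2 \<le> n" using n_pos by linarith
  define j where "j = (if k = 0 then 1 else (0::nat))"
  have j: "j < n" "j \<noteq> k" unfolding j_def using n2 by auto
  have Tpos: "0 < T" using T k r_pos t_pos by (metis mult_pos_pos)
  have lkK: "lam k \<in> K" using lam k by auto
  show ?thesis
  proof (rule decomp_gen[of k "\<lambda>i. - lam i / lam k" "- e / lam k"])
    show "k < n" by fact
    show "\<forall>i<n. - lam i / lam k \<in> K" using lam lkK by auto
    show "- e / lam k \<in> K" using e lkK by auto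
  next
    fix cc assume cc: "cK cc"
      and cond: "cc k = (\<Sum>i\<in>{..<n} - {k}. - lam i / lam k * cc i) + cc n * (- e / lam k)"
    define A where "A i = ev cc i" for i
    define M where "M = Mk k (ev cc)"
    have A: "i < n \<Longrightarrow> A i = cc i + cc n * x i" for i unfolding A_def ev_def by simp
    have lkcc: "lam k * cc k = - (\<Sum>i\<in>{..<n} - {k}. lam i * cc i) - cc n * e"
    proof -
      have s1: "lam k * (\<Sum>i\<in>{..<n} - {k}. - lam i / lam k * cc i) = - (\<Sum>i\<in>{..<n} - {k}. lam i * cc i)"
        unfolding sum_distrib_left sum_negf[symmetric] by (rule sum.cong) (use lk in \<open>auto simp: field_simps\<close>)
      have s2: "lam k * (cc n * (- e / lam k)) = - (cc n * e)" using lk by (simp add: field_simps)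
      have "lam k * cc k = lam k * ((\<Sum>i\<in>{..<n} - {k}. - lam i / lam k * cc i) + cc n * (- e / lam k))"
        by (subst cond) (rule refl)
      also have "\<dots> = lam k * (\<Sum>i\<in>{..<n} - {k}. - lam i / lam k * cc i) + lam k * (cc n * (- e / lam k))"
        by (rule distrib_left)
      finally show ?thesis unfolding s1 s2 by simp
    qed
    have wsplit: "w = lam k * x k + (\<Sum>i\<in>{..<n} - {k}. lam i * x i)"
      unfolding w_def using k by (simp add: sum.remove)
    have iden: "lam k * A k = - (\<Sum>i\<in>{..<n} - {k}. lam i * A i) + cc n * (w - e)"
    proof -
      have "(\<Sum>i\<in>{..<n} - {k}. lam i * A i) = (\<Sum>i\<in>{..<n} - {k}. lam i * cc i) + cc n * (\<Sum>i\<in>{..<n} - {k}. lam i * x i)"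
        by (simp add: A sum.distrib sum_distrib_left algebra_simps)
      then show ?thesis unfolding wsplit A[OF k(1)] using iden_aux[OF lkcc] by simp
    qed
    have M0: "0 \<le> M" unfolding M_def by (rule Mk_nonneg)
    have b1: "T * v (lam i * A i) \<le> R * M" if i: "i \<in> {..<n} - {k}" for i
    proof -
      have i': "i < n" "i \<noteq> k" using i by auto
      have "T * v (lam i) = t i * (v (lam i) * r i)" using T i' by (simp add: algebra_simps)
      also have "\<dots> \<le> t i * R" using Rge[OF i'(1)] t_pos i' by (simp add: mult_left_mono)
      finally have 1: "T * v (lam i) \<le> t i * R" .
      have "T * v (lam i * A i) = (T * v (lam i)) * v (A i)" by simp
      also have "\<dots> \<le> (t i * R) * v (A i)" using 1 by (simp add: mult_right_mono)
      also have "\<dots> = R * (t i * v (A i))" by simp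
      also have "\<dots> \<le> R * M" using Mk_ge[OF i'] R0 unfolding M_def A_def by (simp add: mult_left_mono)
      finally show ?thesis .
    qed
    have b2: "T * v (cc n * (w - e)) \<le> R * M"
    proof -
      have "T * v (cc n * (w - e)) = (T * v (cc n)) * v (w - e)" by simp
      also have "\<dots> \<le> (T * v (cc n)) * R" using e(2) Tpos by (simp add: mult_left_mono)
      also have "T * v (cc n) = t j * (v (cc n) * r j)" using T j by (simp add: algebra_simps)
      also have "\<dots> \<le> t j * v (cc j + cc n * x j)"
        using v_lin_ge[of "cc j" "cc n" "x j"] cc j x_notin t_pos unfolding cK_def by (simp add: mult_left_mono)
      also have "\<dots> \<le> M"
      proof -
        have "t j * v (ev cc j) \<le> Mk k (ev cc)" by (rule Mk_ge) (use j in auto)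
        then show ?thesis using A[of j] j unfolding M_def A_def by simp
      qed
      finally show ?thesis using R0 by (simp add: mult_right_mono mult.commute)
    qed
    have "v (lam k * A k) \<le> R * M / T"
    proof -
      have s1: "v (\<Sum>i\<in>{..<n} - {k}. lam i * A i) \<le> R * M / T"
        by (rule v_sum_le) (use b1 Tpos R0 M0 in \<open>auto simp: field_simps\<close>)
      have s2: "v (cc n * (w - e)) \<le> R * M / T" using b2 Tpos by (simp add: field_simps)
      have "v (lam k * A k) \<le> max (v (- (\<Sum>i\<in>{..<n} - {k}. lam i * A i))) (v (cc n * (w - e)))"
        unfolding iden by (rule v_ultra)
      then show ?thesis using s1 s2 by simp
    qed
    then have le1: "T * (v (lam k) * v (A k)) \<le> R * M" using Tpos by (simp add: field_simps)
    have eq1: "T * v (lam k) = t k * R" using T k by (simp add: algebra_simps)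
    have "R * (t k * v (A k)) = (T * v (lam k)) * v (A k)" unfolding eq1 by (simp add: algebra_simps)
    also have "\<dots> = T * (v (lam k) * v (A k))" by (simp add: mult.assoc)
    also have "\<dots> \<le> R * M" by (rule le1)
    finally have "R * (t k * v (A k)) \<le> R * M" .
    then show "t k * v (ev cc k) \<le> Mk k (ev cc)" using Rpos unfolding M_def A_def by simp
  qed
qed

lemma part1:
  assumes "indecomposable K NN EE"
  shows "(\<forall>i<n. \<forall>j<n. r i * t i = r j * t j) \<and> orth_mod K v n x"
proof
  have nd: "\<not> decomposable K NN EE" using assms unfolding indecomposable_def by simp
  show eq: "\<forall>i<n. \<forall>j<n. r i * t i = r j * t j"
  proof (intro allI impI)
    fix i j assume ij: "i < n" "j < n"
    show "r i * t i = r j * t j"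
    proof (rule ccontr)
      assume "r i * t i \<noteq> r j * t j"
      then have "r i * t i < r j * t j \<or> r j * t j < r i * t i" by linarith
      then show False
      proof
        assume "r i * t i < r j * t j"
        then have "decomposable K NN EE" using part1_eq[OF ij(1) ij(2)] by simp
        then show False using nd by simp
      next
        assume "r j * t j < r i * t i"
        then have "decomposable K NN EE" using part1_eq[OF ij(2) ij(1)] by simp
        then show False using nd by simp
      qed
    qed
  qed
  show "orth_mod K v n x"
  proof (rule ccontr)
    assume no: "\<not> orth_mod K v n x"
    have T0: "\<forall>i<n. r i * t i = r 0 * t 0"
    proof (intro allI impI)
      fix i assume i: "i < n"
      have "0 < n" using n_pos by simp
      then show "r i * t i = r 0 * t 0" using eq i by blast
    qed
    have "decomposable K NN EE" by (rule part1_orth[OF T0 no])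
    then show False using nd by simp
  qed
qed

end

lemma rho_exists:
  fixes A B C :: real
  assumes "A < B" "C < B" "0 < B" "0 \<le> A"
  shows "\<exists>rho>1. rho * A < B \<and> rho * C < B"
proof (cases "max A C \<le> 0")
  case True
  then show ?thesis using assms by (intro exI[of _ 2]) auto
next
  case False
  define m where "m = max A C"
  have m: "0 < m" "m < B" "A \<le> m" "C \<le> m" using False assms unfolding m_def by auto
  define rho where "rho = (1 + B / m) / 2"
  have r1: "1 < rho" using m unfolding rho_def by (simp add: field_simps)
  have rm: "rho * m < B" using m unfolding rho_def by (simp add: field_simps)
  have r0: "0 \<le> rho" using r1 by simp
  have h1: "rho * A \<le> rho * m" "rho * C \<le> rho * m" using mult_left_mono[OF m(3) r0] mult_left_mono[OF m(4) r0] by auto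
  have "rho * A < B" "rho * C < B" using h1 rm by linarith+
  then show ?thesis using r1 by blast
qed

context ctx begin

lemma klinD:
  assumes "klin_functional K EE phi"
  shows "\<And>y. y \<in> EE \<Longrightarrow> phi y \<in> K"
    and "\<And>y z. y \<in> EE \<Longrightarrow> z \<in> EE \<Longrightarrow> phi (vadd y z) = phi y + phi z"
    and "\<And>c y. c \<in> K \<Longrightarrow> y \<in> EE \<Longrightarrow> phi (vsmul c y) = c * phi y"
  using assms unfolding klin_functional_def by auto

lemma phi_ev:
  assumes phi: "klin_functional K EE phi" and cc: "cK cc"
  shows "phi (ev cc) = (\<Sum>i<n. cc i * phi (unitv i)) + cc n * phi (xvec n x)"
proof -
  define p where "p m = ev (\<lambda>j. if j < m then cc j else if j = n then cc n else 0)" for m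
  have pK: "cK (\<lambda>j. if j < m then cc j else if j = n then cc n else 0)" for m
    using cc unfolding cK_def by auto
  have IH: "m \<le> n \<Longrightarrow> phi (p m) = (\<Sum>i<m. cc i * phi (unitv i)) + cc n * phi (xvec n x)" for m
  proof (induction m)
    case 0
    have ccn: "cc n \<in> K" using cc unfolding cK_def by auto
    have "p 0 = vsmul (cc n) (xvec n x)" unfolding p_def xvec_ev ev_smul by (rule ev_cong) auto
    then show ?case using klinD(3)[OF phi ccn xvec_E] by simp
  next
    case (Suc m)
    then have m: "m < n" by simp
    have ccm: "cc m \<in> K" using cc m unfolding cK_def by auto
    have "p (Suc m) = vadd (p m) (vsmul (cc m) (unitv m))"
      unfolding p_def unitv_ev[OF m] ev_smul ev_add by (rule ev_cong) (use m in \<open>auto simp: less_Suc_eq\<close>)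
    moreover have "p m \<in> EE" unfolding p_def by (rule ev_in_E[OF pK])
    moreover have "vsmul (cc m) (unitv m) \<in> EE"
      unfolding unitv_ev[OF m] ev_smul by (rule ev_in_E) (use ccm in \<open>auto simp: cK_def\<close>)
    ultimately have "phi (p (Suc m)) = phi (p m) + cc m * phi (unitv m)"
      using klinD(2)[OF phi] klinD(3)[OF phi ccm unitv_E[OF m]] by simp
    then show ?case using Suc by simp
  qed
  moreover have "p n = ev cc" unfolding p_def by (rule ev_cong) auto
  ultimately show ?thesis using IH[of n] by simp
qed

end

locale ctx2 = ctx +
  fixes s :: real
  assumes s_eq: "\<forall>i<n. r i * t i = s" and orth: "orth_mod K v n x"
begin

definition W :: "((nat \<Rightarrow> 'a) \<Rightarrow> 'a) \<Rightarrow> 'a" where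
  "W phi = (\<Sum>i<n. phi (unitv i) * (- x i)) + phi (xvec n x) * 1"

definition rat :: "((nat \<Rightarrow> 'a) \<Rightarrow> 'a) \<Rightarrow> real set" where
  "rat phi = (\<lambda>y. v (phi y) / NN y) ` (EE - {vzero})"

lemma s_pos: "0 < s" using s_eq n_pos r_pos t_pos by (metis less_le_trans mult_pos_pos zero_less_one)

lemma unitv0_ne: "unitv 0 \<noteq> vzero" unfolding unitv_def vzero_def by (metis one_neq_zero)
lemma rat_ne: "rat phi \<noteq> {}" unfolding rat_def using unitv_E[of 0] n_pos unitv0_ne by auto
lemma rat_nonneg: "z \<in> rat phi \<Longrightarrow> 0 \<le> z" unfolding rat_def using NN_nonneg by auto

lemma W_sum: "W phi = phi (xvec n x) + (\<Sum>i<n. (- phi (unitv i)) * x i)"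
  unfolding W_def by (simp add: algebra_simps)

lemma opn:
  assumes phi: "klin_functional K EE phi"
  shows "\<And>y. y \<in> EE \<Longrightarrow> y \<noteq> vzero \<Longrightarrow> v (phi y) / NN y \<le> v (W phi) / s"
    and "bdd_above (rat phi)"
    and "Sup (rat phi) = v (W phi) / s"
proof -
  define a where "a i = phi (unitv i)" for i
  define b where "b = phi (xvec n x)"
  have aK: "i < n \<Longrightarrow> a i \<in> K" for i unfolding a_def using klinD(1)[OF phi unitv_E] by simp
  have bK: "b \<in> K" unfolding b_def using klinD(1)[OF phi xvec_E] .
  define R where "R = Max ((\<lambda>i. v (a i) * r i) ` {..<n})"
  have finR: "finite ((\<lambda>i. v (a i) * r i) ` {..<n})" by simp
  have Rge: "i < n \<Longrightarrow> v (a i) * r i \<le> R" for i unfolding R_def by (rule Max_ge[OF finR]) auto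
  have "0 \<le> v (a 0) * r 0" by (intro mult_nonneg_nonneg v_nonneg dK_nonneg)
  then have R0: "0 \<le> R" using Rge[of 0] n_pos by simp
  have dW: "dK (W phi) = R"
  proof -
    have "dK (W phi) = dK (\<Sum>i<n. (- a i) * x i)" unfolding W_sum a_def[symmetric] b_def[symmetric]
      by (rule dK_translate[OF bK])
    also have "\<dots> = Max ((\<lambda>i. v (- a i) * r i) ` {..<n})"
    proof -
      have H: "\<forall>lam. (\<forall>i<n. lam i \<in> K) \<longrightarrow> dK (\<Sum>i<n. lam i * x i) = Max ((\<lambda>i. v (lam i) * r i) ` {..<n})"
        using orth unfolding orth_mod_def by blast
      have h2: "\<And>i. i < n \<Longrightarrow> - a i \<in> K" using aK by auto
      from H[rule_format, of "\<lambda>i. - a i", OF h2] show ?thesis by simp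
    qed
    finally show ?thesis unfolding R_def by simp
  qed
  have RW: "R \<le> v (W phi)" using dK_le[of 0 "W phi"] dW by simp
  have RWs: "R < v (W phi)" if W0: "W phi \<noteq> 0"
  proof (cases "R = 0")
    case True then show ?thesis using W0 by (simp add: v_pos_iff)
  next
    case False
    then have "0 < dK (W phi)" using dW R0 by simp
    then have "W phi \<notin> K" using dK_K by force
    then show ?thesis using dK_strict[of "W phi" 0] dW by simp
  qed
  have phi_form: "phi (ev cc) = (\<Sum>i<n. a i * ev cc i) + cc n * W phi" if cc: "cK cc" for cc
  proof -
    have 1: "phi (ev cc) = (\<Sum>i<n. cc i * a i) + cc n * b" unfolding a_def b_def by (rule phi_ev[OF phi cc])
    have 2: "(\<Sum>i<n. a i * ev cc i) = (\<Sum>i<n. cc i * a i) + cc n * (\<Sum>i<n. a i * x i)"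
      unfolding ev_def by (simp add: sum.distrib sum_distrib_left algebra_simps)
    have 3: "W phi = - (\<Sum>i<n. a i * x i) + b"
      unfolding W_def a_def b_def by (simp add: sum_negf)
    show ?thesis unfolding 1 2 3 by (simp add: algebra_simps)
  qed
  show up: "v (phi y) / NN y \<le> v (W phi) / s" if y: "y \<in> EE" "y \<noteq> vzero" for y
  proof -
    obtain cc where cc: "cK cc" "y = ev cc" using E_ev y(1) by blast
    have Npos: "0 < NN y" using NN_pos y by simp
    have b1: "v (a i * ev cc i) \<le> v (W phi) * NN y / s" if i: "i \<in> {..<n}" for i
    proof -
      have i': "i < n" using i by simp
      have "s * v (a i * ev cc i) = (v (a i) * r i) * (t i * v (ev cc i))"
        using s_eq i' by (simp add: algebra_simps)
      also have "\<dots> \<le> R * NN y"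
        by (rule mult_mono) (use Rge[OF i'] NN_ge[OF i', of "ev cc"] R0 t_pos i' cc(2) in auto)
      also have "\<dots> \<le> v (W phi) * NN y" using RW NN_nonneg by (simp add: mult_right_mono)
      finally show ?thesis using s_pos by (simp add: field_simps)
    qed
    have b2: "v (cc n * W phi) \<le> v (W phi) * NN y / s"
    proof -
      have "s * v (cc n) = t 0 * (v (cc n) * r 0)" using s_eq n_pos by (simp add: algebra_simps)
      also have "\<dots> \<le> t 0 * v (cc 0 + cc n * x 0)"
        using v_lin_ge[of "cc 0" "cc n" "x 0"] cc(1) x_notin t_pos n_pos unfolding cK_def
        by (simp add: mult_left_mono)
      also have "\<dots> = t 0 * v (ev cc 0)" using n_pos unfolding ev_def by simp
      also have "\<dots> \<le> NN y" using NN_ge[of 0 y] n_pos cc(2) by simp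
      finally have "s * v (cc n) * v (W phi) \<le> NN y * v (W phi)" by (simp add: mult_right_mono)
      then show ?thesis using s_pos by (simp add: field_simps)
    qed
    have "v (phi y) \<le> v (W phi) * NN y / s"
    proof -
      have "v (phi y) \<le> max (v (\<Sum>i<n. a i * ev cc i)) (v (cc n * W phi))"
        unfolding cc(2) phi_form[OF cc(1)] by (rule v_ultra)
      moreover have "v (\<Sum>i<n. a i * ev cc i) \<le> v (W phi) * NN y / s"
        by (rule v_sum_le) (use b1 s_pos NN_nonneg in auto)
      ultimately show ?thesis using b2 by simp
    qed
    then show ?thesis using Npos s_pos by (simp add: field_simps)
  qed
  show bdd: "bdd_above (rat phi)" unfolding rat_def using up by (intro bdd_aboveI[of _ "v (W phi) / s"]) auto
  show "Sup (rat phi) = v (W phi) / s"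
  proof (rule cSup_eq_non_empty)
    show "rat phi \<noteq> {}" by (rule rat_ne)
    show "\<And>z. z \<in> rat phi \<Longrightarrow> z \<le> v (W phi) / s" unfolding rat_def using up by auto
  next
    fix U assume U: "\<And>z. z \<in> rat phi \<Longrightarrow> z \<le> U"
    show "v (W phi) / s \<le> U"
    proof (cases "W phi = 0")
      case True
      obtain z where "z \<in> rat phi" using rat_ne by blast
      then show ?thesis using U rat_nonneg True by fastforce
    next
      case False
      show ?thesis
      proof (rule ccontr)
        assume "\<not> ?thesis"
        then have Ul: "s * U < v (W phi)" using s_pos by (simp add: field_simps)
        have vW: "0 < v (W phi)" using False by (simp add: v_pos_iff)
        obtain rho where rho: "1 < rho" "rho * R < v (W phi)" "rho * (s * U) < v (W phi)"
          using rho_exists[OF RWs[OF False] Ul vW R0] by blast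
        have "\<forall>i. \<exists>e. i < n \<longrightarrow> e \<in> K \<and> v (x i - e) < rho * r i"
        proof
          fix i
          show "\<exists>e. i < n \<longrightarrow> e \<in> K \<and> v (x i - e) < rho * r i"
          proof (cases "i < n")
            case True
            then have "dK (x i) < rho * r i" using r_pos[OF True] rho(1) by simp
            then show ?thesis using dK_approx by blast
          qed simp
        qed
        then obtain e where e: "\<And>i. i < n \<Longrightarrow> e i \<in> K \<and> v (x i - e i) < rho * r i" by metis
        define cc where "cc j = (if j = n then 1 else - e j)" for j
        have ccK: "cK cc" unfolding cK_def cc_def using e by auto
        have evc: "i < n \<Longrightarrow> ev cc i = x i - e i" for i unfolding ev_def cc_def by simp
        have Nl: "NN (ev cc) < rho * s"
        proof (rule NN_lt)
          fix i assume i: "i < n"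
          have "t i * v (ev cc i) < t i * (rho * r i)" using e[OF i] t_pos i evc[OF i] by simp
          also have "\<dots> = rho * s" using s_eq i by (simp add: algebra_simps)
          finally show "t i * v (ev cc i) < rho * s" .
        qed
        have ne: "ev cc \<noteq> vzero"
        proof
          assume "ev cc = vzero"
          then have "x 0 - e 0 = 0" using evc[of 0] n_pos unfolding vzero_def by (metis less_le_trans zero_less_one)
          then show False using e[of 0] x_notin n_pos by auto
        qed
        have Npos: "0 < NN (ev cc)" using NN_pos[OF ev_in_E[OF ccK] ne] .
        have "v (\<Sum>i<n. a i * ev cc i) < v (W phi)"
        proof (rule v_sum_lt)
          show "\<forall>i\<in>{..<n}. v (a i * ev cc i) < v (W phi)"
          proof
            fix i assume i: "i \<in> {..<n}"
            then have i': "i < n" by simp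
            have "v (a i * ev cc i) = v (a i) * v (x i - e i)" using evc[OF i'] by simp
            also have "\<dots> \<le> v (a i) * (rho * r i)" using e[OF i'] by (simp add: mult_left_mono)
            also have "\<dots> = rho * (v (a i) * r i)" by simp
            also have "\<dots> \<le> rho * R" using Rge[OF i'] rho(1) by simp
            finally show "v (a i * ev cc i) < v (W phi)" using rho(2) by linarith
          qed
        qed (use vW in auto)
        then have vphi: "v (phi (ev cc)) = v (W phi)"
          unfolding phi_form[OF ccK] using v_strict[of "\<Sum>i<n. a i * ev cc i" "W phi"]
          by (simp add: cc_def add.commute)
        have "v (phi (ev cc)) / NN (ev cc) \<in> rat phi" unfolding rat_def using ev_in_E[OF ccK] ne by auto
        then have "v (W phi) / NN (ev cc) \<le> U" using U vphi by simp
        then have "v (W phi) \<le> U * NN (ev cc)" using Npos by (simp add: field_simps)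
        also have "\<dots> \<le> U * (rho * s)"
        proof -
          have "0 \<le> U" using U rat_ne rat_nonneg by (meson ex_in_conv order_trans)
          then show ?thesis using Nl by (simp add: mult_left_mono)
        qed
        finally show False using rho(3) by (simp add: algebra_simps)
      qed
    qed
  qed
qed

lemma opnorm_eq: "klin_functional K EE phi \<Longrightarrow> opnorm v NN EE phi = (1 / s) * v (W phi)"
  using opn(3) unfolding opnorm_def rat_def by simp

end

context ctx begin

definition crd :: "nat \<Rightarrow> (nat \<Rightarrow> 'a) \<Rightarrow> 'a" where
  "crd j y = (SOME cc. cK cc \<and> y = ev cc) j"

lemma crd_ev: assumes "cK cc" "j \<le> n" shows "crd j (ev cc) = cc j"
proof -
  define c' where "c' = (SOME c. cK c \<and> ev cc = ev c)"
  have "cK c' \<and> ev cc = ev c'" unfolding c'_def by (rule someI[of _ cc]) (use assms in simp)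
  then have "\<forall>j\<le>n. cc j = c' j" using ev_inj assms(1) by blast
  then show ?thesis unfolding crd_def c'_def[symmetric] using assms(2) by simp
qed

lemma crd_K: "y \<in> EE \<Longrightarrow> j \<le> n \<Longrightarrow> crd j y \<in> K"
  using E_ev crd_ev unfolding cK_def by fastforce

lemma E_vadd: "y \<in> EE \<Longrightarrow> z \<in> EE \<Longrightarrow> vadd y z \<in> EE"
  using E_ev ev_add ev_in_E cK_add by metis
lemma E_vsmul: "c \<in> K \<Longrightarrow> y \<in> EE \<Longrightarrow> vsmul c y \<in> EE"
  using E_ev ev_smul ev_in_E cK_smul by metis
lemma E_zero: "vzero \<in> EE" using ev_zero ev_in_E cK_zero by metis

lemma crd_add: "y \<in> EE \<Longrightarrow> z \<in> EE \<Longrightarrow> j \<le> n \<Longrightarrow> crd j (vadd y z) = crd j y + crd j z"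
proof -
  assume y: "y \<in> EE" and z: "z \<in> EE" and j: "j \<le> n"
  obtain a where a: "cK a" "y = ev a" using E_ev y by blast
  obtain b where b: "cK b" "z = ev b" using E_ev z by blast
  show ?thesis unfolding a(2) b(2) ev_add using crd_ev[OF cK_add[OF a(1) b(1)] j] crd_ev[OF a(1) j] crd_ev[OF b(1) j] by simp
qed

lemma crd_smul: "c \<in> K \<Longrightarrow> y \<in> EE \<Longrightarrow> j \<le> n \<Longrightarrow> crd j (vsmul c y) = c * crd j y"
proof -
  assume c: "c \<in> K" and y: "y \<in> EE" and j: "j \<le> n"
  obtain a where a: "cK a" "y = ev a" using E_ev y by blast
  show ?thesis unfolding a(2) ev_smul using crd_ev[OF cK_smul[OF c a(1)] j] crd_ev[OF a(1) j] by simp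
qed

lemma crd_zero: "j \<le> n \<Longrightarrow> crd j vzero = 0"
  unfolding ev_zero using crd_ev[OF cK_zero] by simp

lemma crd_nonzero: assumes "y \<in> EE" "y \<noteq> vzero" shows "\<exists>j\<le>n. crd j y \<noteq> 0"
proof -
  obtain a where a: "cK a" "y = ev a" using E_ev assms(1) by blast
  then have "\<not> (\<forall>j\<le>n. a j = 0)" using ev_zero_iff assms(2) by blast
  then show ?thesis using crd_ev[OF a(1)] a(2) by auto
qed

lemma vadd_zero: "vadd y vzero = y" "vadd vzero y = y" unfolding vadd_def vzero_def by auto

end

context ctx2 begin

lemma part2b: "klin_functional K EE phi \<Longrightarrow> W phi \<in> kspan1 K (1 # map x [0..<n])"
proof -
  assume phi: "klin_functional K EE phi"
  define c where "c j = (if j = 0 then phi (xvec n x) else - phi (unitv (j - 1)))" for j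
  have cK': "\<forall>j<length (1 # map x [0..<n]). c j \<in> K"
    unfolding c_def using klinD(1)[OF phi xvec_E] klinD(1)[OF phi unitv_E] by auto
  have "(\<Sum>j<length (1 # map x [0..<n]). c j * (1 # map x [0..<n]) ! j)
      = c 0 * 1 + (\<Sum>i<n. c (Suc i) * x i)"
    by (simp add: sum.lessThan_Suc_shift del: sum.lessThan_Suc)
  also have "\<dots> = phi (xvec n x) + (\<Sum>i<n. phi (unitv i) * (- x i))"
  proof -
    have c0: "c 0 = phi (xvec n x)" and cS: "\<And>i. c (Suc i) = - phi (unitv i)" unfolding c_def by auto
    show ?thesis unfolding c0 cS by simp
  qed
  also have "\<dots> = W phi" unfolding W_def by (simp add: add.commute)
  finally have eq: "(\<Sum>j<length (1 # map x [0..<n]). c j * (1 # map x [0..<n]) ! j) = W phi" .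
  show ?thesis unfolding kspan1_def mem_Collect_eq
    by (rule exI[of _ c]) (use eq cK' in simp)
qed

lemma part2c: "indecomposable K NN EE"
  unfolding indecomposable_def
proof
  assume "decomposable K NN EE"
  then obtain D1 D2 where sub1: "ksubspace K D1" and sub2: "ksubspace K D2"
    and D1E: "D1 \<subseteq> EE" and D2E: "D2 \<subseteq> EE" and ne1: "D1 \<noteq> {vzero}" and ne2: "D2 \<noteq> {vzero}"
    and uq: "\<forall>y\<in>EE. \<exists>!p. fst p \<in> D1 \<and> snd p \<in> D2 \<and> y = vadd (fst p) (snd p)"
    and nm: "\<forall>d1\<in>D1. \<forall>d2\<in>D2. NN (vadd d1 d2) = max (NN d1) (NN d2)"
    unfolding decomposable_def by blast
  have z1: "vzero \<in> D1" and z2: "vzero \<in> D2" using sub1 sub2 unfolding ksubspace_def by auto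
  have add1: "vadd a b \<in> D1" if "a \<in> D1" "b \<in> D1" for a b using sub1 that unfolding ksubspace_def by auto
  have add2: "vadd a b \<in> D2" if "a \<in> D2" "b \<in> D2" for a b using sub2 that unfolding ksubspace_def by auto
  have sm1: "vsmul c a \<in> D1" if "c \<in> K" "a \<in> D1" for c a using sub1 that unfolding ksubspace_def by auto
  have sm2: "vsmul c a \<in> D2" if "c \<in> K" "a \<in> D2" for c a using sub2 that unfolding ksubspace_def by auto
  define PP where "PP y = (THE p. fst p \<in> D1 \<and> snd p \<in> D2 \<and> y = vadd (fst p) (snd p))" for y
  have PPin: "fst (PP y) \<in> D1 \<and> snd (PP y) \<in> D2 \<and> y = vadd (fst (PP y)) (snd (PP y))" if "y \<in> EE" for y
    unfolding PP_def using theI'[OF uq[rule_format, OF that]] .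
  have PPeq: "fst (PP y) = d1 \<and> snd (PP y) = d2" if "y \<in> EE" "d1 \<in> D1" "d2 \<in> D2" "y = vadd d1 d2" for y d1 d2
  proof -
    have "PP y = (d1, d2)" unfolding PP_def
      by (rule the1_equality[OF uq[rule_format, OF that(1)]]) (use that in simp)
    then show ?thesis by simp
  qed
  define P1 where "P1 y = fst (PP y)" for y
  define P2 where "P2 y = snd (PP y)" for y
  have P1in: "y \<in> EE \<Longrightarrow> P1 y \<in> D1" and P2in: "y \<in> EE \<Longrightarrow> P2 y \<in> D2"
    and Psum: "y \<in> EE \<Longrightarrow> y = vadd (P1 y) (P2 y)" for y using PPin unfolding P1_def P2_def by auto
  have Peq: "y \<in> EE \<Longrightarrow> d1 \<in> D1 \<Longrightarrow> d2 \<in> D2 \<Longrightarrow> y = vadd d1 d2 \<Longrightarrow> P1 y = d1 \<and> P2 y = d2" for y d1 d2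
    using PPeq unfolding P1_def P2_def by blast
  have P1D1: "P1 d = d \<and> P2 d = vzero" if "d \<in> D1" for d
  proof (rule Peq)
    show "d \<in> EE" using that D1E by auto
    show "d \<in> D1" by fact
    show "vzero \<in> D2" by fact
    show "d = vadd d vzero" by (rule sym, rule vadd_zero(1))
  qed
  have P1D2: "P1 d = vzero \<and> P2 d = d" if "d \<in> D2" for d
  proof (rule Peq)
    show "d \<in> EE" using that D2E by auto
    show "vzero \<in> D1" by fact
    show "d \<in> D2" by fact
    show "d = vadd vzero d" by (rule sym, rule vadd_zero(2))
  qed
  have Padd: "P1 (vadd y z) = vadd (P1 y) (P1 z) \<and> P2 (vadd y z) = vadd (P2 y) (P2 z)" if "y \<in> EE" "z \<in> EE" for y z
  proof (rule Peq)
    show "vadd y z \<in> EE" using E_vadd that by blast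
    show "vadd (P1 y) (P1 z) \<in> D1" using add1 P1in that by blast
    show "vadd (P2 y) (P2 z) \<in> D2" using add2 P2in that by blast
    have "vadd y z = vadd (vadd (P1 y) (P2 y)) (vadd (P1 z) (P2 z))" using Psum that by metis
    then show "vadd y z = vadd (vadd (P1 y) (P1 z)) (vadd (P2 y) (P2 z))" unfolding vadd_def by (simp add: algebra_simps)
  qed
  have Psmul: "P1 (vsmul c y) = vsmul c (P1 y) \<and> P2 (vsmul c y) = vsmul c (P2 y)" if "c \<in> K" "y \<in> EE" for c y
  proof (rule Peq)
    show "vsmul c y \<in> EE" using E_vsmul that by blast
    show "vsmul c (P1 y) \<in> D1" using sm1 P1in that by blast
    show "vsmul c (P2 y) \<in> D2" using sm2 P2in that by blast
    have "vsmul c y = vsmul c (vadd (P1 y) (P2 y))" using Psum that by metis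
    then show "vsmul c y = vadd (vsmul c (P1 y)) (vsmul c (P2 y))" unfolding vadd_def vsmul_def by (simp add: algebra_simps)
  qed
  obtain d1 where d1: "d1 \<in> D1" "d1 \<noteq> vzero" using ne1 z1 by blast
  obtain d2 where d2: "d2 \<in> D2" "d2 \<noteq> vzero" using ne2 z2 by blast
  obtain j1 where j1: "j1 \<le> n" "crd j1 d1 \<noteq> 0" using crd_nonzero d1 D1E by blast
  obtain j2 where j2: "j2 \<le> n" "crd j2 d2 \<noteq> 0" using crd_nonzero d2 D2E by blast
  define phi1 where "phi1 y = crd j1 (P1 y)" for y
  define phi2 where "phi2 y = crd j2 (P2 y)" for y
  have kl1: "klin_functional K EE phi1" unfolding klin_functional_def phi1_def
  proof (intro conjI ballI)
    fix y assume y: "y \<in> EE"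
    show "crd j1 (P1 y) \<in> K" using crd_K P1in[OF y] D1E j1 by blast
  next
    fix y z assume y: "y \<in> EE" and z: "z \<in> EE"
    show "crd j1 (P1 (vadd y z)) = crd j1 (P1 y) + crd j1 (P1 z)"
      using Padd[OF y z] crd_add P1in[OF y] P1in[OF z] D1E j1 by auto
  next
    fix c y assume c: "c \<in> K" and y: "y \<in> EE"
    show "crd j1 (P1 (vsmul c y)) = c * crd j1 (P1 y)"
      using Psmul[OF c y] crd_smul[OF c] P1in[OF y] D1E j1 by auto
  qed
  have kl2: "klin_functional K EE phi2" unfolding klin_functional_def phi2_def
  proof (intro conjI ballI)
    fix y assume y: "y \<in> EE"
    show "crd j2 (P2 y) \<in> K" using crd_K P2in[OF y] D2E j2 by blast
  next
    fix y z assume y: "y \<in> EE" and z: "z \<in> EE"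
    show "crd j2 (P2 (vadd y z)) = crd j2 (P2 y) + crd j2 (P2 z)"
      using Padd[OF y z] crd_add P2in[OF y] P2in[OF z] D2E j2 by auto
  next
    fix c y assume c: "c \<in> K" and y: "y \<in> EE"
    show "crd j2 (P2 (vsmul c y)) = c * crd j2 (P2 y)"
      using Psmul[OF c y] crd_smul[OF c] P2in[OF y] D2E j2 by auto
  qed
  have phi1_D2: "d \<in> D2 \<Longrightarrow> phi1 d = 0" for d unfolding phi1_def using P1D2 crd_zero j1 by simp
  have phi2_D1: "d \<in> D1 \<Longrightarrow> phi2 d = 0" for d unfolding phi2_def using P1D1 crd_zero j2 by simp
  have phi1_d1: "phi1 d1 \<noteq> 0" unfolding phi1_def using P1D1[OF d1(1)] j1 by simp
  have phi2_d2: "phi2 d2 \<noteq> 0" unfolding phi2_def using P1D2[OF d2(1)] j2 by simp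
  have Wpos: "0 < v (W psi)" if kl: "klin_functional K EE psi" and d: "d \<in> EE" "d \<noteq> vzero" "psi d \<noteq> 0" for psi d
  proof -
    have "v (psi d) / NN d \<in> rat psi" unfolding rat_def using d by auto
    then have "v (psi d) / NN d \<le> Sup (rat psi)" using opn(2)[OF kl] by (rule cSup_upper)
    moreover have "0 < v (psi d) / NN d" using NN_pos[OF d(1,2)] d(3) by (simp add: v_pos_iff)
    ultimately have "0 < Sup (rat psi)" by linarith
    then show ?thesis using opn(3)[OF kl] s_pos by (simp add: field_simps)
  qed
  have W1: "W phi1 \<noteq> 0" using Wpos[OF kl1 _ d1(2) phi1_d1] D1E d1(1) by fastforce
  have W2: "W phi2 \<noteq> 0" using Wpos[OF kl2 _ d2(2) phi2_d2] D2E d2(1) by fastforce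
  define u where "u = W phi1 / W phi2"
  have "u \<noteq> 0" unfolding u_def using W1 W2 by simp
  then obtain b where b: "b \<in> K" "v (u - b) < v u" using immed_approx by blast
  define phi where "phi y = phi1 y - b * phi2 y" for y
  have kl: "klin_functional K EE phi" unfolding klin_functional_def phi_def
  proof (intro conjI ballI)
    fix y assume y: "y \<in> EE"
    show "phi1 y - b * phi2 y \<in> K" using klinD(1)[OF kl1 y] klinD(1)[OF kl2 y] b(1) by auto
  next
    fix y z assume y: "y \<in> EE" and z: "z \<in> EE"
    show "phi1 (vadd y z) - b * phi2 (vadd y z) = phi1 y - b * phi2 y + (phi1 z - b * phi2 z)"
      using klinD(2)[OF kl1 y z] klinD(2)[OF kl2 y z] by (simp add: algebra_simps)
  next
    fix c y assume c: "c \<in> K" and y: "y \<in> EE"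
    show "phi1 (vsmul c y) - b * phi2 (vsmul c y) = c * (phi1 y - b * phi2 y)"
      using klinD(3)[OF kl1 c y] klinD(3)[OF kl2 c y] by (simp add: algebra_simps)
  qed
  have Wphi: "W phi = W phi1 - b * W phi2"
  proof -
    have "(\<Sum>i<n. (phi1 (unitv i) - b * phi2 (unitv i)) * (- x i))
        = (\<Sum>i<n. phi1 (unitv i) * (- x i)) - b * (\<Sum>i<n. phi2 (unitv i) * (- x i))"
      unfolding sum_distrib_left sum_subtractf[symmetric] by (rule sum.cong) (auto simp: algebra_simps)
    then show ?thesis unfolding W_def phi_def by (simp add: algebra_simps)
  qed
  have "W phi = W phi2 * (u - b)" unfolding Wphi u_def using W2 by (simp add: field_simps)
  then have "v (W phi) = v (W phi2) * v (u - b)" by simp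
  also have "\<dots> < v (W phi2) * v u" using b(2) W2 by (simp add: v_pos_iff)
  also have "\<dots> = v (W phi1)" unfolding u_def using W2 by simp
  finally have lt: "v (W phi) < v (W phi1)" .
  have "Sup (rat phi1) \<le> Sup (rat phi)"
  proof (rule cSup_least)
    show "rat phi1 \<noteq> {}" by (rule rat_ne)
  next
    fix z assume "z \<in> rat phi1"
    then obtain y where y: "y \<in> EE" "y \<noteq> vzero" "z = v (phi1 y) / NN y" unfolding rat_def by auto
    have bdd: "bdd_above (rat phi)" by (rule opn(2)[OF kl])
    have S0: "0 \<le> Sup (rat phi)"
    proof -
      obtain w where "w \<in> rat phi" using rat_ne by blast
      then show ?thesis using rat_nonneg cSup_upper[OF _ bdd] by (meson order_trans)
    qed
    define y1 where "y1 = P1 y"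
    define y2 where "y2 = P2 y"
    have y1: "y1 \<in> D1" "y1 \<in> EE" using P1in[OF y(1)] D1E unfolding y1_def by auto
    have y2: "y2 \<in> D2" using P2in[OF y(1)] unfolding y2_def by auto
    have py: "phi1 y = phi1 y1" unfolding phi1_def y1_def using P1D1[OF P1in[OF y(1)]] by simp
    show "z \<le> Sup (rat phi)"
    proof (cases "y1 = vzero")
      case True
      then have "phi1 y = 0" using py unfolding phi1_def using P1D1[OF z1] crd_zero j1 by simp
      then show ?thesis using y(3) S0 by simp
    next
      case False
      have N1: "0 < NN y1" using NN_pos[OF y1(2) False] .
      have "NN y = max (NN y1) (NN y2)" using nm y1(1) y2 Psum[OF y(1)] unfolding y1_def y2_def by metis
      then have Nle: "NN y1 \<le> NN y" by simp
      have "z = v (phi1 y1) / NN y" using y(3) py by simp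
      also have "\<dots> \<le> v (phi1 y1) / NN y1" using N1 Nle by (simp add: frac_le)
      also have "\<dots> = v (phi y1) / NN y1" unfolding phi_def using phi2_D1[OF y1(1)] by simp
      also have "\<dots> \<le> Sup (rat phi)"
        by (rule cSup_upper[OF _ bdd]) (use y1(2) False in \<open>auto simp: rat_def\<close>)
      finally show ?thesis .
    qed
  qed
  then have "v (W phi1) / s \<le> v (W phi) / s" using opn(3)[OF kl1] opn(3)[OF kl] by simp
  then show False using lt s_pos by (simp add: divide_right_mono_neg field_simps)
qed

end

context vf begin

lemma hom_sol:
  "finite I \<Longrightarrow> card I < N \<Longrightarrow> (\<forall>i\<in>I. \<forall>j<N. M i j \<in> K) \<Longrightarrow>
   \<exists>a. (\<forall>j<N. a j \<in> K) \<and> (\<exists>j<N. a j \<noteq> 0) \<and> (\<forall>i\<in>I. (\<Sum>j<N. M i j * a j) = 0)"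
proof (induction N arbitrary: I M)
  case 0 then show ?case by simp
next
  case (Suc N)
  show ?case
  proof (cases "\<forall>i\<in>I. M i N = 0")
    case True
    define a where "a j = (if j = N then 1 else (0::'a))" for j :: nat
    have "(\<Sum>j<Suc N. M i j * a j) = 0" if "i \<in> I" for i
    proof -
      have "(\<Sum>j<Suc N. M i j * a j) = M i N" unfolding a_def
        by (simp add: if_distrib sum.delta cong: if_cong)
      then show ?thesis using True that by simp
    qed
    then show ?thesis by (intro exI[of _ a]) (auto simp: a_def)
  next
    case False
    then obtain i0 where i0: "i0 \<in> I" "M i0 N \<noteq> 0" by blast
    define I' where "I' = I - {i0}"
    define M' where "M' i j = M i j - (M i N / M i0 N) * M i0 j" for i j
    have "0 < card I" using Suc.prems(1) i0(1) card_gt_0_iff by blast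
    then have cI': "card I' < N" unfolding I'_def using Suc.prems(1,2) i0(1) by (simp add: card_Diff_singleton)
    have fI': "finite I'" unfolding I'_def using Suc.prems(1) by simp
    have MK: "\<forall>i\<in>I'. \<forall>j<N. M' i j \<in> K"
      unfolding M'_def I'_def using Suc.prems(3) i0(1) by (auto intro!: Kdiff Kmult Kdivide)
    obtain a' where a': "\<forall>j<N. a' j \<in> K" "\<exists>j<N. a' j \<noteq> 0" "\<forall>i\<in>I'. (\<Sum>j<N. M' i j * a' j) = 0"
      using Suc.IH[OF fI' cI' MK] by blast
    define s0 where "s0 = (\<Sum>j<N. M i0 j * a' j)"
    define a where "a j = (if j < N then a' j else if j = N then - s0 / M i0 N else 0)" for j
    have aK: "\<forall>j<Suc N. a j \<in> K"
    proof (intro allI impI)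
      fix j assume "j < Suc N"
      have "s0 \<in> K" unfolding s0_def using Suc.prems(3) i0(1) a'(1) by (intro Ksum) auto
      moreover have "M i0 N \<in> K" using Suc.prems(3) i0(1) by auto
      ultimately show "a j \<in> K" unfolding a_def using a'(1) by auto
    qed
    have rowsum: "(\<Sum>j<Suc N. M i j * a j) = (\<Sum>j<N. M i j * a' j) + M i N * (- s0 / M i0 N)" for i
      unfolding a_def by simp
    have rows: "(\<Sum>j<Suc N. M i j * a j) = 0" if i: "i \<in> I" for i
    proof (cases "i = i0")
      case True
      then show ?thesis unfolding rowsum s0_def using i0(2) by (simp add: field_simps)
    next
      case False
      then have "i \<in> I'" unfolding I'_def using i by simp
      then have "(\<Sum>j<N. M' i j * a' j) = 0" using a'(3) by blast
      moreover have "(\<Sum>j<N. M' i j * a' j) = (\<Sum>j<N. M i j * a' j) - (M i N / M i0 N) * s0"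
        unfolding M'_def s0_def by (simp add: sum_subtractf sum_distrib_left algebra_simps)
      ultimately show ?thesis unfolding rowsum using i0(2) by (simp add: field_simps)
    qed
    have "\<exists>j<Suc N. a j \<noteq> 0" using a'(2) unfolding a_def by (metis less_SucI)
    then show ?thesis using aK rows by blast
  qed
qed

end

context ctx begin

definition HH :: "(nat \<Rightarrow> 'a) \<Rightarrow> (nat \<Rightarrow> 'a) set" where
  "HH a = {ev cc | cc. cK cc \<and> (\<Sum>i<Suc n. cc i * a i) = 0}"

lemma ev_lincomb:
  "(\<lambda>k. \<Sum>l\<in>S. d l * ev (G l) k) = ev (\<lambda>j. \<Sum>l\<in>S. d l * G l j)"
  unfolding ev_def by (rule ext) (simp add: sum.distrib sum_distrib_right algebra_simps sum_distrib_left)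

lemma hyper:
  assumes DE: "D \<subseteq> EE" and dim: "kdim_is K D n"
  shows "\<exists>a. (\<forall>j\<le>n. a j \<in> K) \<and> (\<exists>j\<le>n. a j \<noteq> 0) \<and> D = HH a"
proof -
  obtain bs where bs: "length bs = n" "klin_indep K bs" "kspan K bs = D"
    using dim unfolding kdim_is_def by blast
  have bsD: "bs ! l \<in> D" if l: "l < n" for l
  proof -
    define c where "c j = (if j = l then 1 else (0::'a))" for j
    have h: "c j * (bs ! j) i = (if j = l then (bs ! l) i else 0)" for j i by (simp add: c_def)
    have e1: "(\<lambda>i. \<Sum>j<length bs. c j * (bs ! j) i) = bs ! l"
      unfolding h using l bs(1) by (intro ext) (simp add: sum.delta)
    have e2: "\<forall>j<length bs. c j \<in> K" unfolding c_def by simp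
    show ?thesis unfolding bs(3)[symmetric] kspan_def mem_Collect_eq
      by (rule exI[of _ c]) (use e1 e2 in simp)
  qed
  have "\<forall>l. \<exists>cc. l < n \<longrightarrow> cK cc \<and> bs ! l = ev cc"
    using bsD DE E_ev by blast
  then obtain C where C: "\<And>l. l < n \<Longrightarrow> cK (C l) \<and> bs ! l = ev (C l)" using choice by metis
  have "\<exists>a. (\<forall>j<Suc n. a j \<in> K) \<and> (\<exists>j<Suc n. a j \<noteq> 0) \<and> (\<forall>l\<in>{..<n}. (\<Sum>j<Suc n. C l j * a j) = 0)"
    by (rule hom_sol) (use C in \<open>auto simp: cK_def less_Suc_eq_le\<close>)
  then obtain a where a: "\<forall>j\<le>n. a j \<in> K" "\<exists>j\<le>n. a j \<noteq> 0" "\<And>l. l < n \<Longrightarrow> (\<Sum>j<Suc n. C l j * a j) = 0"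
    by (auto simp: less_Suc_eq_le)
  have sub: "D \<subseteq> HH a"
  proof
    fix y assume "y \<in> D"
    then obtain d where d: "\<forall>j<n. d j \<in> K" "y = (\<lambda>i. \<Sum>l<n. d l * (bs ! l) i)"
      unfolding bs(3)[symmetric] kspan_def bs(1) by blast
    have "y = (\<lambda>i. \<Sum>l<n. d l * ev (C l) i)" unfolding d(2) using C by (intro ext sum.cong) auto
    also have "\<dots> = ev (\<lambda>j. \<Sum>l<n. d l * C l j)" by (rule ev_lincomb)
    finally have y: "y = ev (\<lambda>j. \<Sum>l<n. d l * C l j)" .
    have cK': "cK (\<lambda>j. \<Sum>l<n. d l * C l j)" using C d(1) unfolding cK_def by (auto intro!: Ksum Kmult)
    have "(\<Sum>i<Suc n. (\<Sum>l<n. d l * C l i) * a i) = (\<Sum>l<n. d l * (\<Sum>i<Suc n. C l i * a i))"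
      unfolding sum_distrib_right by (subst sum.swap) (simp add: sum_distrib_left mult.assoc del: sum.lessThan_Suc)
    also have "\<dots> = 0" using a(3) by simp
    finally show "y \<in> HH a" unfolding HH_def using y cK' by blast
  qed
  have sup: "HH a \<subseteq> D"
  proof
    fix y assume "y \<in> HH a"
    then obtain cc where cc: "cK cc" "y = ev cc" "(\<Sum>i<Suc n. cc i * a i) = 0" unfolding HH_def by blast
    show "y \<in> D"
    proof (rule ccontr)
      assume yD: "y \<notin> D"
      obtain p where p: "p \<le> n" "a p \<noteq> 0" using a(2) by blast
      define Cx where "Cx j = (if j < n then C j else cc)" for j
      have CxK: "cK (Cx j)" if "j < Suc n" for j using C cc(1) unfolding Cx_def by auto
      have Cxa: "(\<Sum>i<Suc n. Cx j i * a i) = 0" if "j < Suc n" for j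
        using a(3) cc(3) unfolding Cx_def by auto
      have cardI: "card ({..n} - {p}) < Suc n" using p by (simp add: card_Diff_singleton)
      have "\<exists>lam. (\<forall>j<Suc n. lam j \<in> K) \<and> (\<exists>j<Suc n. lam j \<noteq> 0) \<and>
          (\<forall>i\<in>{..n} - {p}. (\<Sum>j<Suc n. Cx j i * lam j) = 0)"
        by (rule hom_sol) (use CxK cardI in \<open>auto simp: cK_def\<close>)
      then obtain lam where lam: "\<forall>j<Suc n. lam j \<in> K" "\<exists>j<Suc n. lam j \<noteq> 0"
          "\<And>i. i \<le> n \<Longrightarrow> i \<noteq> p \<Longrightarrow> (\<Sum>j<Suc n. Cx j i * lam j) = 0" by auto
      define Z where "Z i = (\<Sum>j<Suc n. lam j * Cx j i)" for i
      have Z0: "i \<le> n \<Longrightarrow> i \<noteq> p \<Longrightarrow> Z i = 0" for i unfolding Z_def using lam(3) by (simp add: mult.commute)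
      have "(\<Sum>i<Suc n. a i * Z i) = (\<Sum>j<Suc n. lam j * (\<Sum>i<Suc n. Cx j i * a i))"
        unfolding Z_def sum_distrib_left by (subst sum.swap) (rule sum.cong[OF refl], rule sum.cong[OF refl], simp add: algebra_simps)
      also have "\<dots> = 0" using Cxa by simp
      finally have tot: "(\<Sum>i<Suc n. a i * Z i) = 0" .
      have "(\<Sum>i<Suc n. a i * Z i) = a p * Z p + (\<Sum>i\<in>{..<Suc n}-{p}. a i * Z i)"
        using p by (subst sum.remove[of _ p]) auto
      moreover have "(\<Sum>i\<in>{..<Suc n}-{p}. a i * Z i) = 0" by (rule sum.neutral) (use Z0 in auto)
      ultimately have "a p * Z p = 0" using tot by simp
      then have "Z p = 0" using p by simp
      then have Zall: "\<And>i. i \<le> n \<Longrightarrow> Z i = 0" using Z0 by metis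
      have "(\<lambda>k. \<Sum>j<Suc n. lam j * ev (Cx j) k) = ev Z" unfolding Z_def by (rule ev_lincomb)
      also have "\<dots> = vzero" unfolding ev_zero by (rule ev_cong) (use Zall in simp)
      finally have zsum: "(\<lambda>k. \<Sum>j<Suc n. lam j * ev (Cx j) k) = vzero" .
      have split: "(\<Sum>j<Suc n. lam j * ev (Cx j) k) = (\<Sum>j<n. lam j * (bs ! j) k) + lam n * y k" for k
      proof -
        have "(\<Sum>j<n. lam j * ev (Cx j) k) = (\<Sum>j<n. lam j * (bs ! j) k)"
          using C unfolding Cx_def by (intro sum.cong) auto
        then show ?thesis unfolding Cx_def using cc(2) by simp
      qed
      have zk: "(\<Sum>j<n. lam j * (bs ! j) k) + lam n * y k = 0" for k
        using fun_cong[OF zsum, of k] split[of k] unfolding vzero_def by simp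
      show False
      proof (cases "lam n = 0")
        case True
        then have "(\<lambda>i. \<Sum>j<length bs. lam j * (bs ! j) i) = vzero"
          using zk bs(1) unfolding vzero_def by (intro ext) simp
        moreover have "\<forall>j<length bs. lam j \<in> K" using lam(1) bs(1) by auto
        ultimately have "\<forall>j<n. lam j = 0" using bs(2) bs(1) unfolding klin_indep_def by blast
        then show False using lam(2) True by (metis less_Suc_eq)
      next
        case False
        define c where "c j = - lam j / lam n" for j
        have "y = (\<lambda>i. \<Sum>j<length bs. c j * (bs ! j) i)"
        proof
          fix k
          have "y k = - (\<Sum>j<n. lam j * (bs ! j) k) / lam n" using zk[of k] False
            by (simp add: field_simps add_eq_0_iff)
          also have "\<dots> = (\<Sum>j<n. c j * (bs ! j) k)" unfolding c_def
            by (simp add: sum_divide_distrib sum_negf[symmetric])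
          finally show "y k = (\<Sum>j<length bs. c j * (bs ! j) k)" using bs(1) by simp
        qed
        moreover have "\<forall>j<length bs. c j \<in> K" unfolding c_def using lam(1) bs(1) by (auto intro!: Kdivide Kuminus)
        ultimately have "y \<in> kspan K bs" unfolding kspan_def by blast
        then show False using yD bs(3) by simp
      qed
    qed
  qed
  show ?thesis using a(1,2) sub sup by blast
qed

end

context ctx begin

lemma sum_split_nk:
  assumes "k < n"
  shows "(\<Sum>i<Suc n. f i) = f n + f k + (\<Sum>i\<in>{..<n}-{k}. f i)"
proof -
  have "(\<Sum>i<n. f i) = f k + (\<Sum>i\<in>{..<n}-{k}. f i)" using assms by (subst sum.remove[of _ k]) auto
  then show ?thesis by (simp add: ac_simps)
qed

lemma Kn_vadd: "a \<in> Kn K n \<Longrightarrow> b \<in> Kn K n \<Longrightarrow> vadd a b \<in> Kn K n"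
  unfolding Kn_def vadd_def by auto
lemma Kn_vsmul: "c \<in> K \<Longrightarrow> a \<in> Kn K n \<Longrightarrow> vsmul c a \<in> Kn K n"
  unfolding Kn_def vsmul_def by auto

lemma iso_caseA:
  assumes aK: "\<forall>j\<le>n. a j \<in> K" and anz: "\<exists>j\<le>n. a j \<noteq> 0" and a0: "\<forall>i<n. a i = 0"
  shows "iso_to_Kn K v n t NN (HH a)"
proof -
  have an: "a n \<noteq> 0" using anz a0 by (metis le_neq_implies_less)
  have eq: "HH a = Kn K n"
  proof
    show "HH a \<subseteq> Kn K n"
    proof
      fix y assume "y \<in> HH a"
      then obtain cc where cc: "cK cc" "y = ev cc" "(\<Sum>i<Suc n. cc i * a i) = 0" unfolding HH_def by blast
      have "(\<Sum>i<n. cc i * a i) = 0" using a0 by simp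
      then have "cc n = 0" using cc(3) an by simp
      then show "y \<in> Kn K n" using cc(1,2) unfolding Kn_def ev_def cK_def by auto
    qed
    show "Kn K n \<subseteq> HH a"
    proof
      fix y assume y: "y \<in> Kn K n"
      define cc where "cc j = (if j = n then 0 else y j)" for j
      have "y = ev cc" unfolding ev_def cc_def using y unfolding Kn_def by (intro ext) auto
      moreover have "cK cc" unfolding cK_def cc_def using y unfolding Kn_def by auto
      moreover have "(\<Sum>i<Suc n. cc i * a i) = 0" using a0 unfolding cc_def by simp
      ultimately show "y \<in> HH a" unfolding HH_def by blast
    qed
  qed
  show ?thesis unfolding iso_to_Kn_def eq
    by (rule exI[of _ "\<lambda>y. y"]) (simp add: bij_betw_def)
qed

end

context ctx2 begin

lemma iso_caseB:
  assumes aK: "\<forall>j\<le>n. a j \<in> K" and k: "k < n" and ak: "a k \<noteq> 0"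
    and kmax: "\<And>i. i < n \<Longrightarrow> v (a i) * t k \<le> v (a k) * t i"
  shows "iso_to_Kn K v n t NN (HH a)"
proof -
  have tk: "0 < t k" using t_pos k by simp
  have vak: "0 < v (a k)" using ak by (simp add: v_pos_iff)
  have akK: "a k \<in> K" using aK k by simp
  define Wv where "Wv = a n - (\<Sum>i<n. a i * x i)"
  define R where "R = Max ((\<lambda>i. v (a i) * r i) ` {..<n})"
  have finR: "finite ((\<lambda>i. v (a i) * r i) ` {..<n})" by simp
  have Rge: "i < n \<Longrightarrow> v (a i) * r i \<le> R" for i unfolding R_def by (rule Max_ge[OF finR]) auto
  have Rpos: "0 < R" using Rge[OF k] vak r_pos[OF k] by (meson less_le_trans mult_pos_pos)
  have dW: "dK Wv = R"
  proof -
    have "Wv = a n + (\<Sum>i<n. (- a i) * x i)" unfolding Wv_def by (simp add: sum_negf)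
    then have "dK Wv = dK (\<Sum>i<n. (- a i) * x i)" using dK_translate aK by simp
    also have "\<dots> = Max ((\<lambda>i. v (- a i) * r i) ` {..<n})"
    proof -
      have H: "\<forall>lam. (\<forall>i<n. lam i \<in> K) \<longrightarrow> dK (\<Sum>i<n. lam i * x i) = Max ((\<lambda>i. v (lam i) * r i) ` {..<n})"
        using orth unfolding orth_mod_def by blast
      have h2: "\<And>i. i < n \<Longrightarrow> - a i \<in> K" using aK by auto
      from H[rule_format, of "\<lambda>i. - a i", OF h2] show ?thesis by simp
    qed
    finally show ?thesis unfolding R_def by simp
  qed
  have "Wv \<notin> K" using dW Rpos dK_K by force
  then have RW: "R < v Wv" using dK_strict[of Wv 0] dW by simp
  have vW: "0 < v Wv" using RW Rpos by linarith
  obtain rho where rho: "1 < rho" "rho * R < v Wv" using rho_exists[OF RW vW vW] Rpos by auto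
  have "\<forall>i. \<exists>e. i < n \<longrightarrow> e \<in> K \<and> v (x i - e) < rho * r i"
  proof
    fix i
    show "\<exists>e. i < n \<longrightarrow> e \<in> K \<and> v (x i - e) < rho * r i"
    proof (cases "i < n")
      case True
      then have "dK (x i) < rho * r i" using r_pos[OF True] rho(1) by simp
      then show ?thesis using dK_approx by blast
    qed simp
  qed
  then obtain e where e: "\<And>i. i < n \<Longrightarrow> e i \<in> K \<and> v (x i - e i) < rho * r i" by metis
  define Sx where "Sx = (\<Sum>i\<in>{..<n}-{k}. a i * (- e i))"
  define gc where "gc j = (if j = n then 1 else if j = k then - (a n + Sx) / a k else - e j)" for j
  have kn: "k \<noteq> n" using k by simp
  have SxK: "Sx \<in> K" unfolding Sx_def using aK e by (intro Ksum Kmult Kuminus) auto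
  have gcK: "j \<le> n \<Longrightarrow> gc j \<in> K" for j unfolding gc_def using aK e SxK akK
    by (auto intro!: Kdivide Kuminus Kadd)
  have gsum: "(\<Sum>i<Suc n. gc i * a i) = 0"
  proof -
    have "(\<Sum>i\<in>{..<n}-{k}. gc i * a i) = Sx" unfolding Sx_def gc_def by (intro sum.cong) auto
    then show ?thesis unfolding sum_split_nk[OF k] using kn ak unfolding gc_def by (simp add: field_simps)
  qed
  define G where "G i = gc i + x i" for i
  have Gi: "i < n \<Longrightarrow> i \<noteq> k \<Longrightarrow> G i = x i - e i" for i unfolding G_def gc_def by simp
  have iden: "a k * G k = - (Wv + (\<Sum>i\<in>{..<n}-{k}. a i * G i))"
  proof -
    have 1: "(\<Sum>i\<in>{..<n}-{k}. a i * G i) = (\<Sum>i\<in>{..<n}-{k}. a i * x i) + Sx"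
      unfolding Sx_def by (simp add: Gi sum.distrib[symmetric] algebra_simps)
    have 2: "(\<Sum>i<n. a i * x i) = a k * x k + (\<Sum>i\<in>{..<n}-{k}. a i * x i)"
      using k by (subst sum.remove[of _ k]) auto
    have 3: "a k * G k = - (a n + Sx) + a k * x k" unfolding G_def gc_def using kn ak by (simp add: field_simps)
    show ?thesis unfolding 3 1 Wv_def 2 by (simp add: algebra_simps)
  qed
  have vS: "v (\<Sum>i\<in>{..<n}-{k}. a i * G i) < v Wv"
  proof (rule v_sum_lt)
    show "\<forall>i\<in>{..<n}-{k}. v (a i * G i) < v Wv"
    proof
      fix i assume "i \<in> {..<n}-{k}"
      then have i: "i < n" "i \<noteq> k" by auto
      have "v (a i * G i) = v (a i) * v (x i - e i)" using Gi[OF i] by simp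
      also have "\<dots> \<le> v (a i) * (rho * r i)" using e[OF i(1)] by (simp add: mult_left_mono)
      also have "\<dots> = rho * (v (a i) * r i)" by simp
      also have "\<dots> \<le> rho * R" using Rge[OF i(1)] rho(1) by simp
      finally show "v (a i * G i) < v Wv" using rho(2) by linarith
    qed
  qed (use vW in auto)
  have vaG: "v (a k * G k) = v Wv" unfolding iden v_minus using v_strict[OF vS] .
  have Gk0: "G k \<noteq> 0" using vaG vW by auto
  obtain lam0 where lam0: "lam0 \<in> K" "lam0 \<noteq> 0" "v lam0 = v (G k)" using immed_value[OF Gk0] by blast
  have vl0: "0 < v lam0" using lam0(2) by (simp add: v_pos_iff)
  have Qbig: "rho * s < t k * v lam0"
  proof -
    have "v (a k) * (rho * r k) \<le> rho * R" using Rge[OF k] rho(1) by (simp add: algebra_simps)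
    also have "\<dots> < v Wv" by (rule rho(2))
    also have "\<dots> = v (a k) * v (G k)" using vaG by simp
    finally have "rho * r k < v (G k)" using vak by simp
    then have "t k * (rho * r k) < t k * v lam0" using tk lam0(3) by simp
    moreover have "t k * (rho * r k) = rho * s" using s_eq k by (simp add: algebra_simps)
    ultimately show ?thesis by simp
  qed
  have smallG: "t i * v (G i) < rho * s" if i: "i < n" "i \<noteq> k" for i
  proof -
    have "t i * v (G i) < t i * (rho * r i)" using e[OF i(1)] Gi[OF i] t_pos i by simp
    also have "\<dots> = rho * s" using s_eq i by (simp add: algebra_simps)
    finally show ?thesis .
  qed
  define mm where "mm al = al k / lam0" for al :: "nat \<Rightarrow> 'a"
  define Sa where "Sa al = (\<Sum>i\<in>{..<n}-{k}. (a i / a k) * al i)" for al :: "nat \<Rightarrow> 'a"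
  define tc where "tc al j = (if j = n then mm al else if j = k then mm al * gc k - Sa al else al j + mm al * gc j)"
    for al :: "nat \<Rightarrow> 'a" and j
  define T where "T al = ev (tc al)" for al
  have evk: "T al k = mm al * G k - Sa al" for al unfolding T_def ev_def tc_def G_def using k kn by (simp add: algebra_simps)
  have evi: "i < n \<Longrightarrow> i \<noteq> k \<Longrightarrow> T al i = al i + mm al * G i" for al i
    unfolding T_def ev_def tc_def G_def by (simp add: algebra_simps)
  have tcK: "al \<in> Kn K n \<Longrightarrow> cK (tc al)" for al
  proof -
    assume al: "al \<in> Kn K n"
    have alK: "i < n \<Longrightarrow> al i \<in> K" for i using al unfolding Kn_def by auto
    have mK: "mm al \<in> K" unfolding mm_def using alK[OF k] lam0(1) by auto
    have SK: "Sa al \<in> K" unfolding Sa_def using aK alK akK by (intro Ksum Kmult Kdivide) auto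
    show "cK (tc al)" unfolding cK_def tc_def using mK SK gcK alK k by (auto intro!: Kadd Kmult Kdiff)
  qed
  have tcsum: "(\<Sum>i<Suc n. tc al i * a i) = 0" for al
  proof -
    have 1: "(\<Sum>i\<in>{..<n}-{k}. tc al i * a i) = (\<Sum>i\<in>{..<n}-{k}. al i * a i) + mm al * (\<Sum>i\<in>{..<n}-{k}. gc i * a i)"
      unfolding tc_def using kn by (simp add: sum.distrib sum_distrib_left algebra_simps)
    have 2: "Sa al * a k = (\<Sum>i\<in>{..<n}-{k}. al i * a i)"
      unfolding Sa_def sum_distrib_right using ak by (intro sum.cong) (auto simp: field_simps)
    have 3: "(\<Sum>i<Suc n. tc al i * a i) = mm al * (\<Sum>i<Suc n. gc i * a i)"
      unfolding sum_split_nk[OF k] 1 unfolding tc_def using kn 2[symmetric] gc_def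
      by (simp add: algebra_simps)
    show ?thesis unfolding 3 gsum by simp
  qed
  have THH: "al \<in> Kn K n \<Longrightarrow> T al \<in> HH a" for al unfolding HH_def T_def using tcK tcsum by blast
  have tcadd: "tc (vadd al be) = (\<lambda>j. tc al j + tc be j)" for al be
  proof -
    have m: "mm (vadd al be) = mm al + mm be" unfolding mm_def vadd_def by (simp add: add_divide_distrib)
    have sa: "Sa (vadd al be) = Sa al + Sa be" unfolding Sa_def vadd_def by (simp add: sum.distrib distrib_left)
    show ?thesis unfolding tc_def m sa by (intro ext) (simp add: vadd_def algebra_simps)
  qed
  have tcsmul: "tc (vsmul c al) = (\<lambda>j. c * tc al j)" for c al
  proof -
    have m: "mm (vsmul c al) = c * mm al" unfolding mm_def vsmul_def by simp
    have sa: "Sa (vsmul c al) = c * Sa al" unfolding Sa_def vsmul_def by (simp add: sum_distrib_left algebra_simps)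
    show ?thesis unfolding tc_def m sa by (intro ext) (simp add: vsmul_def algebra_simps)
  qed
  have Tadd: "T (vadd al be) = vadd (T al) (T be)" for al be unfolding T_def tcadd ev_add ..
  have Tsmul: "T (vsmul c al) = vsmul c (T al)" for c al unfolding T_def tcsmul ev_smul ..
  have Tinj: "inj_on T (Kn K n)"
  proof (rule inj_onI)
    fix al be assume al: "al \<in> Kn K n" and be: "be \<in> Kn K n" and eq: "T al = T be"
    have c: "\<forall>j\<le>n. tc al j = tc be j" using ev_inj[OF tcK[OF al] tcK[OF be]] eq unfolding T_def by blast
    then have "mm al = mm be" unfolding tc_def by (metis order_refl)
    then have kk: "al k = be k" unfolding mm_def using lam0(2) by simp
    show "al = be"
    proof
      fix i
      show "al i = be i"
      proof (cases "i < n")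
        case True
        show ?thesis
        proof (cases "i = k")
          case False
          then have "tc al i = tc be i" using c True by simp
          then show ?thesis unfolding tc_def using True False \<open>mm al = mm be\<close> by simp
        qed (use kk in simp)
      next
        case False
        then show ?thesis using al be unfolding Kn_def by simp
      qed
    qed
  qed
  have Tsurj: "HH a \<subseteq> T ` Kn K n"
  proof
    fix y assume "y \<in> HH a"
    then obtain cc where cc: "cK cc" "y = ev cc" "(\<Sum>i<Suc n. cc i * a i) = 0" unfolding HH_def by blast
    define al where "al i = (if i < n then (if i = k then lam0 * cc n else cc i - cc n * gc i) else 0)" for i
    have alKn: "al \<in> Kn K n" unfolding Kn_def al_def using cc(1) gcK lam0(1) unfolding cK_def by (auto intro!: Kdiff Kmult)
    have mal: "mm al = cc n" unfolding mm_def al_def using k lam0(2) by simp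
    have aS: "a k * Sa al = (\<Sum>i\<in>{..<n}-{k}. cc i * a i) - cc n * (\<Sum>i\<in>{..<n}-{k}. gc i * a i)"
      unfolding Sa_def sum_distrib_left sum_subtractf[symmetric]
      by (rule sum.cong) (use ak in \<open>auto simp: al_def field_simps\<close>)
    have P: "(\<Sum>i\<in>{..<n}-{k}. cc i * a i) = - (cc n * a n + cc k * a k)"
      using cc(3) unfolding sum_split_nk[OF k] by (simp add: algebra_simps add_eq_0_iff)
    have Q: "(\<Sum>i\<in>{..<n}-{k}. gc i * a i) = - (1 * a n + gc k * a k)"
      using gsum unfolding sum_split_nk[OF k] gc_def by (simp add: algebra_simps add_eq_0_iff)
    have "tc al k = cc k"
    proof -
      have "a k * (cc n * gc k - Sa al) = a k * cc k" unfolding right_diff_distrib aS P Q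
        by (simp add: algebra_simps)
      then show ?thesis unfolding tc_def mal using kn ak by simp
    qed
    then have "T al = y" unfolding T_def cc(2)
      by (intro ev_cong) (auto simp: tc_def mal al_def)
    then show "y \<in> T ` Kn K n" using alKn by blast
  qed
  have Timg: "T ` Kn K n = HH a" using THH Tsurj by blast
  have Tnorm: "NN (T al) = pnorm n t v al" if al: "al \<in> Kn K n" for al
  proof -
    define P where "P = Mk k al"
    define Q where "Q = t k * v (al k)"
    have P0: "0 \<le> P" unfolding P_def by (rule Mk_nonneg)
    have Q0: "0 \<le> Q" unfolding Q_def using tk by simp
    have NA: "pnorm n t v al = max P Q" unfolding P_def Q_def by (rule NN_Mk[OF k])
    have F1: "t k * v (Sa al) \<le> P"
    proof -
      have "v (Sa al) \<le> P / t k" unfolding Sa_def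
      proof (rule v_sum_le)
        show "\<forall>i\<in>{..<n}-{k}. v (a i / a k * al i) \<le> P / t k"
        proof
          fix i assume "i \<in> {..<n}-{k}"
          then have i: "i < n" "i \<noteq> k" by auto
          have h: "(v (a i) * t k) * v (al i) \<le> (v (a k) * t i) * v (al i)"
            by (rule mult_right_mono[OF kmax[OF i(1)] v_nonneg])
          have "t k * (v (a i) * v (al i)) \<le> (v (a k) * t i) * v (al i)"
            using h by (simp add: ac_simps)
          then have "t k * v (a i / a k * al i) \<le> t i * v (al i)"
            using vak by (simp add: field_simps)
          also have "\<dots> \<le> P" unfolding P_def by (rule Mk_ge[OF i])
          finally show "v (a i / a k * al i) \<le> P / t k" using tk by (simp add: field_simps)
        qed
      qed (use P0 tk in \<open>simp_all add: divide_nonneg_pos\<close>)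
      then show ?thesis using tk by (simp add: field_simps)
    qed
    have vm: "v (mm al) * v lam0 = v (al k)" unfolding mm_def using vl0 lam0(2) by simp
    have F2: "t k * v (mm al * G k) = Q" unfolding Q_def using vm lam0(3) by simp
    have F3: "t i * v (mm al * G i) \<le> Q" if i: "i < n" "i \<noteq> k" for i
    proof -
      have "t i * v (mm al * G i) = v (mm al) * (t i * v (G i))" by simp
      also have "\<dots> \<le> v (mm al) * (t k * v lam0)"
        using smallG[OF i] Qbig by (intro mult_left_mono) auto
      also have "\<dots> = Q" unfolding Q_def using vm by (simp add: algebra_simps)
      finally show ?thesis .
    qed
    have F3s: "t i * v (mm al * G i) < Q" if i: "i < n" "i \<noteq> k" and nz: "al k \<noteq> 0" for i
    proof -
      have vmp: "0 < v (mm al)" unfolding mm_def using nz lam0(2) by (simp add: v_pos_iff)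
      have "t i * v (mm al * G i) = v (mm al) * (t i * v (G i))" by simp
      also have "\<dots> < v (mm al) * (t k * v lam0)"
        using smallG[OF i] Qbig vmp by (intro mult_strict_left_mono) auto
      also have "\<dots> = Q" unfolding Q_def using vm by (simp add: algebra_simps)
      finally show ?thesis .
    qed
    have NT: "NN (T al) = max (Mk k (T al)) (t k * v (T al k))" by (rule NN_Mk[OF k])
    have up1: "Mk k (T al) \<le> max P Q"
    proof (rule Mk_le)
      show "0 \<le> max P Q" using P0 by simp
      fix i assume i: "i < n" "i \<noteq> k"
      have u: "v (T al i) \<le> max (v (al i)) (v (mm al * G i))" unfolding evi[OF i] by (rule v_ultra)
      have "t i * v (T al i) \<le> t i * max (v (al i)) (v (mm al * G i))"
        by (rule mult_left_mono[OF u]) (use t_pos i in \<open>simp add: less_imp_le\<close>)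
      also have "\<dots> = max (t i * v (al i)) (t i * v (mm al * G i))"
        using less_imp_le[OF t_pos[rule_format, OF i(1)]] by (simp add: max_mult_distrib_left)
      also have "\<dots> \<le> max P Q" using Mk_ge[OF i, of al] F3[OF i] unfolding P_def by (intro max.mono) simp_all
      finally show "t i * v (T al i) \<le> max P Q" .
    qed
    have up2: "t k * v (T al k) \<le> max P Q"
    proof -
      have u: "v (T al k) \<le> max (v (mm al * G k)) (v (Sa al))" unfolding evk by (rule v_diff)
      have "t k * v (T al k) \<le> t k * max (v (mm al * G k)) (v (Sa al))"
        by (rule mult_left_mono[OF u]) (use tk in \<open>simp add: less_imp_le\<close>)
      also have "\<dots> = max (t k * v (mm al * G k)) (t k * v (Sa al))"
        using less_imp_le[OF tk] by (simp add: max_mult_distrib_left)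
      also have "\<dots> \<le> max P Q" using F1 F2 by (auto simp: max_def)
      finally show ?thesis .
    qed
    have low: "max P Q \<le> NN (T al)"
    proof (cases "P < Q")
      case True
      have "t k * v (Sa al) < t k * v (mm al * G k)" using F1 F2 True by simp
      then have "v (- Sa al) < v (mm al * G k)" using tk by simp
      then have "v (mm al * G k + - Sa al) = v (mm al * G k)" by (rule v_strict)
      then have "v (T al k) = v (mm al * G k)" unfolding evk by simp
      then have "t k * v (T al k) = Q" using F2 by simp
      then show ?thesis using NT True by simp
    next
      case False
      show ?thesis
      proof (cases "P = 0")
        case True
        then show ?thesis using False NN_nonneg[of "T al"] Q0 by simp
      next
        case Pn: False
        have "P \<in> insert 0 ((\<lambda>i. t i * v (al i)) ` ({..<n} - {k}))"
          unfolding P_def Mk_def by (rule Max_in) auto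
        then obtain i0 where i0: "i0 < n" "i0 \<noteq> k" "P = t i0 * v (al i0)" using Pn by auto
        have ti0: "0 < t i0" using t_pos i0 by simp
        have lt: "t i0 * v (mm al * G i0) < P"
        proof (cases "al k = 0")
          case True
          then have "mm al = 0" unfolding mm_def by simp
          then show ?thesis using Pn P0 by simp
        next
          case nz: False
          show ?thesis using F3s[OF i0(1,2) nz] False by simp
        qed
        then have "v (mm al * G i0) < v (al i0)" using i0(3) ti0 by simp
        then have "v (al i0 + mm al * G i0) = v (al i0)" by (rule v_strict)
        then have "v (T al i0) = v (al i0)" unfolding evi[OF i0(1,2)] .
        then have "P \<le> Mk k (T al)" using Mk_ge[OF i0(1,2), of "T al"] i0(3) by simp
        then show ?thesis using NT False by simp
      qed
    qed
    have "NN (T al) \<le> max P Q" using NT up1 up2 by simp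
    then have "NN (T al) = max P Q" using low by (rule antisym)
    then show ?thesis using NA by simp
  qed
  show ?thesis unfolding iso_to_Kn_def
  proof (intro exI[of _ T] conjI ballI)
    show "bij_betw T (Kn K n) (HH a)" unfolding bij_betw_def using Tinj Timg by simp
  qed (use Tadd Tsmul Tnorm in auto)
qed
end

context ctx2 begin

lemma part2d:
  assumes DE: "D \<subseteq> EE" and dim: "kdim_is K D n"
  shows "iso_to_Kn K v n t NN D"
proof -
  obtain a where aK: "\<forall>j\<le>n. a j \<in> K" and anz: "\<exists>j\<le>n. a j \<noteq> 0" and D: "D = HH a"
    using hyper[OF DE dim] by blast
  show ?thesis
  proof (cases "\<forall>i<n. a i = 0")
    case True
    then show ?thesis unfolding D using iso_caseA[OF aK anz] by blast
  next
    case False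
    then obtain i1 where i1: "i1 < n" "a i1 \<noteq> 0" by blast
    define f where "f i = v (a i) / t i" for i
    have finf: "finite (f ` {..<n})" "f ` {..<n} \<noteq> {}" using i1 by auto
    obtain k where k: "k < n" "f k = Max (f ` {..<n})"
    proof -
      have "Max (f ` {..<n}) \<in> f ` {..<n}" using finf by (rule Max_in)
      then show ?thesis using that by auto
    qed
    have fk: "i < n \<Longrightarrow> f i \<le> f k" for i unfolding k(2) using finf(1) by (rule Max_ge) simp
    have "0 < f i1" unfolding f_def using i1 t_pos by (simp add: v_pos_iff)
    then have "0 < f k" using fk[OF i1(1)] by linarith
    then have ak: "a k \<noteq> 0" unfolding f_def by auto
    have kmax: "v (a i) * t k \<le> v (a k) * t i" if i: "i < n" for i
    proof -
      have "v (a i) / t i \<le> v (a k) / t k" using fk[OF i] unfolding f_def .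
      then show ?thesis using t_pos i k by (simp add: field_simps)
    qed
    show ?thesis unfolding D by (rule iso_caseB[OF aK k(1) ak kmax])
  qed
qed

end

theorem mainTheorem10:
  fixes K :: "'a::field set" and v :: "'a \<Rightarrow> real"
    and n :: nat and x :: "nat \<Rightarrow> 'a" and t :: "nat \<Rightarrow> real"
  assumes abs_v: "nonarch_abs v"
    and subK: "is_subfield K"
    and complK: "complete_wrt K v"
    and nontriv: "nontrivial_on K v"
    and not_sph: "\<not> spherically_complete K v"
    and sph: "spherically_complete UNIV v"
    and immed: "immediate_ext K v"
    and n_pos: "1 \<le> n"
    and x_notin: "\<forall>i<n. x i \<notin> K"
    and t_pos: "\<forall>i<n. 0 < t i"
  shows
    "(indecomposable K (pnorm n t v) (Espace K n x) \<longrightarrow>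
        (\<forall>i<n. \<forall>j<n. distK K v (x i) * t i = distK K v (x j) * t j) \<and> orth_mod K v n x)
     \<and>
     (\<forall>s. (\<forall>i<n. distK K v (x i) * t i = s) \<and> orth_mod K v n x \<longrightarrow>
        (\<forall>phi. klin_functional K (Espace K n x) phi \<longrightarrow>
            opnorm v (pnorm n t v) (Espace K n x) phi
              = (1 / s) * v ((\<Sum>i<n. phi (unitv i) * (- x i)) + phi (xvec n x) * 1))
        \<and> (\<forall>phi. klin_functional K (Espace K n x) phi \<longrightarrow>
              (\<Sum>i<n. phi (unitv i) * (- x i)) + phi (xvec n x) * 1 \<in> kspan1 K (1 # map x [0..<n]))
        \<and> indecomposable K (pnorm n t v) (Espace K n x)
        \<and> (\<forall>D. ksubspace K D \<and> D \<subseteq> Espace K n x \<and> kdim_is K D n \<longrightarrow>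
              iso_to_Kn K v n t (pnorm n t v) D))"
  proof -
  interpret ctx K v n x t
    by unfold_locales (use abs_v subK complK immed n_pos x_notin t_pos in auto)
  show ?thesis
  proof (rule conjI)
    show "indecomposable K (pnorm n t v) (Espace K n x) \<longrightarrow>
        (\<forall>i<n. \<forall>j<n. distK K v (x i) * t i = distK K v (x j) * t j) \<and> orth_mod K v n x"
      using part1 by blast
  next
    show "\<forall>s. (\<forall>i<n. distK K v (x i) * t i = s) \<and> orth_mod K v n x \<longrightarrow>
        (\<forall>phi. klin_functional K (Espace K n x) phi \<longrightarrow>
            opnorm v (pnorm n t v) (Espace K n x) phi
              = (1 / s) * v ((\<Sum>i<n. phi (unitv i) * (- x i)) + phi (xvec n x) * 1))
        \<and> (\<forall>phi. klin_functional K (Espace K n x) phi \<longrightarrow>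
              (\<Sum>i<n. phi (unitv i) * (- x i)) + phi (xvec n x) * 1 \<in> kspan1 K (1 # map x [0..<n]))
        \<and> indecomposable K (pnorm n t v) (Espace K n x)
        \<and> (\<forall>D. ksubspace K D \<and> D \<subseteq> Espace K n x \<and> kdim_is K D n \<longrightarrow>
              iso_to_Kn K v n t (pnorm n t v) D)"
    proof (intro allI impI)
      fix s assume h: "(\<forall>i<n. distK K v (x i) * t i = s) \<and> orth_mod K v n x"
      interpret c2: ctx2 K v n x t s
        by unfold_locales (use h in auto)
      have 1: "\<forall>phi. klin_functional K (Espace K n x) phi \<longrightarrow>
            opnorm v (pnorm n t v) (Espace K n x) phi
              = (1 / s) * v ((\<Sum>i<n. phi (unitv i) * (- x i)) + phi (xvec n x) * 1)"
        using c2.opnorm_eq unfolding c2.W_def by blast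
      have 2: "\<forall>phi. klin_functional K (Espace K n x) phi \<longrightarrow>
              (\<Sum>i<n. phi (unitv i) * (- x i)) + phi (xvec n x) * 1 \<in> kspan1 K (1 # map x [0..<n])"
        using c2.part2b unfolding c2.W_def by blast
      have 3: "indecomposable K (pnorm n t v) (Espace K n x)" by (rule c2.part2c)
      have 4: "\<forall>D. ksubspace K D \<and> D \<subseteq> Espace K n x \<and> kdim_is K D n \<longrightarrow>
              iso_to_Kn K v n t (pnorm n t v) D"
        using c2.part2d by blast
      show "(\<forall>phi. klin_functional K (Espace K n x) phi \<longrightarrow>
            opnorm v (pnorm n t v) (Espace K n x) phi
              = (1 / s) * v ((\<Sum>i<n. phi (unitv i) * (- x i)) + phi (xvec n x) * 1))
        \<and> (\<forall>phi. klin_functional K (Espace K n x) phi \<longrightarrow>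
              (\<Sum>i<n. phi (unitv i) * (- x i)) + phi (xvec n x) * 1 \<in> kspan1 K (1 # map x [0..<n]))
        \<and> indecomposable K (pnorm n t v) (Espace K n x)
        \<and> (\<forall>D. ksubspace K D \<and> D \<subseteq> Espace K n x \<and> kdim_is K D n \<longrightarrow>
              iso_to_Kn K v n t (pnorm n t v) D)"
        using 1 2 3 4 by (intro conjI)
    qed
  qed
qed

end
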